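(* Let ${}_{\mathfrak Y}\mathfrak B_{\mathfrak X}$ be a left-fibrant graph of bisets, and let $\dagger\in\mathfrak Y$, $*\in\mathfrak X$ be vertices. For any vertex $x\in\mathfrak X$ and any $p\in\pi_1(\mathfrak X,x,* )$ let \[S(p)=\bigcup_{z\in\rho^{-1}(x)}\pi_1(\mathfrak Y,\dagger,\lambda(z))\otimes_{\widehat G_{\lambda(z)}}\widehat B_z\otimes_{\widehat G_{\rho(z)}}p,\] viewed as a left $\pi_1(\mathfrak Y,\dagger)$-set and as a subset of the set $S$ whose quotient by the equivalence relation $\sim$ defining the fundamental biset is $\pi_1(\mathfrak B,\dagger,* )$. Then for all such $p_1,p_2$, the relation $\sim$ restricted to $S(p_1)\times S(p_2)$ is the graph of an isomorphism of left $\pi_1(\mathfrak Y,\dagger)$-sets $S(p_1)\to S(p_2)$.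
   Context: Graphs and graphs of groups. A graph is a set $\mathfrak X=V\sqcup E$ with maps $x\mapsto x^-$, $x\mapsto\bar x$ such that $\bar{\bar x}=x$, $x^-\in V$, $x=x^-\iff x=\bar x\iff x\in V$; $x^+=(\bar x)^-$. Graph morphisms commute with $\bar{\ }$ and $^-$ (may send edges to vertices); simplicial if edges go to edges. A graph of groups is a connected graph with groups $G_x$ and homomorphisms $g\mapsto g^-\colon G_x\to G_{x^-}$, $g\mapsto\bar g\colon G_x\to G_{\bar x}$, with $G_x\to G_{\bar x}\to G_x$ the identity and both maps the identity for vertices; $g^+=(\bar g)^-$. Fundamental groupoid $\pi_1(\mathfrak X)$: objects $V$, generated by the $x\in\mathfrak X$ (from $x^-$ to $x^+$) and elements of the $G_v$, relations of the $G_v$, $v=1\in G_v$, $x\bar x=1$, $g^-x=xg^+$. $\pi_1(\mathfrak X,v,w)$: morphisms from $v$ to $w$. $\widehat G_x$: image of $G_x$ in $\pi_1(\mathfrak X)$. Graphs of bisets. A $\mathfrak Y$-$\mathfrak X$ graph of bisets: graph $\mathfrak B$, graph morphisms $\lambda\colon\mathfrak B\to\mathfrak Y$, $\rho\colon\mathfrak B\to\mathfrak X$, $G_{\lambda(z)}$-$G_{\rho(z)}$-bisets $B_z$, and congruences $b\mapsto b^-\colon B_z\to B_{z^-}$, $b\mapsto\bar b\colon B_z\to B_{\bar z}$ (i.e. $(hbg)^-=h^-b^-g^-$, etc.), with $B_z\to B_{\bar z}\to B_z$ the identity and both maps the identity for vertices; $b^+=(\bar b)^-$. $\widehat B_z=\widehat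 G_{\lambda(z)}\otimes_{G_{\lambda(z)}}B_z\otimes_{G_{\rho(z)}}\widehat G_{\rho(z)}$. Let $S=\bigsqcup_{z\in V(\mathfrak B)}\pi_1(\mathfrak Y,\dagger,\lambda(z))\otimes_{\widehat G_{\lambda(z)}}\widehat B_z\otimes_{\widehat G_{\rho(z)}}\pi_1(\mathfrak X,\rho(z),* )$, and let $\sim$ be the equivalence relation on $S$ generated by $q\otimes b^-\otimes p\sim q\lambda(z)\otimes b^+\otimes\overline{\rho(z)}p$ for edges $z\in\mathfrak B$, $b\in B_z$, $q\in\pi_1(\mathfrak Y,\dagger,\lambda(z)^-)$, $p\in\pi_1(\mathfrak X,\rho(z)^-,* )$ ($\lambda(z),\overline{\rho(z)}$ as groupoid morphisms, trivial if vertices); $S/{\sim}$ is the fundamental biset $\pi_1(\mathfrak B,\dagger,* )$. Left-fibrant: $\rho$ simplicial and for every vertex $v\in\mathfrak B$ and edge $f\in\mathfrak X$ with $f^-=\rho(v)$, the map $\bigsqcup_{e\in\rho^{-1}(f),\,e^-=v}G_{\lambda(v)}\otimes_{G_{\lambda(e)}}B_e\to B_v$, $g\otimes b\mapsto gb^-$, is an isomorphism of $G_{\lambda(v)}$-$G_f$-bisets. *)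

theory Defs
  imports "HOL-Algebra.Group"
begin

section \<open>Graphs (in the sense of Serre / the paper)\<close>

text \<open>A graph is a carrier set C with maps dn (x to x^-) and bar (x to xbar);
  vertices are the fixed points of dn.\<close>

definition gverts :: "'a set \<Rightarrow> ('a \<Rightarrow> 'a) \<Rightarrow> 'a set" where
  "gverts C dn = {x \<in> C. dn x = x}"

definition is_graph :: "'a set \<Rightarrow> ('a \<Rightarrow> 'a) \<Rightarrow> ('a \<Rightarrow> 'a) \<Rightarrow> bool" where
  "is_graph C dn bar \<longleftrightarrow>
     (\<forall>x\<in>C. bar x \<in> C \<and> dn x \<in> C \<and> bar (bar x) = x \<and> dn (dn x) = dn x
            \<and> ((x = dn x) \<longleftrightarrow> (x = bar x)))"

definition graph_connected :: "'a set \<Rightarrow> ('a \<Rightarrow> 'a) \<Rightarrow> ('a \<Rightarrow> 'a) \<Rightarrow> bool" where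
  "graph_connected C dn bar \<longleftrightarrow>
     (\<forall>v\<in>gverts C dn. \<forall>w\<in>gverts C dn.
        (\<lambda>a b. \<exists>e\<in>C. dn e = a \<and> dn (bar e) = b)\<^sup>*\<^sup>* v w)"

definition graph_mor ::
  "'a set \<Rightarrow> ('a \<Rightarrow> 'a) \<Rightarrow> ('a \<Rightarrow> 'a) \<Rightarrow> 'b set \<Rightarrow> ('b \<Rightarrow> 'b) \<Rightarrow> ('b \<Rightarrow> 'b) \<Rightarrow> ('a \<Rightarrow> 'b) \<Rightarrow> bool" where
  "graph_mor C dn bar C' dn' bar' f \<longleftrightarrow>
     (\<forall>x\<in>C. f x \<in> C' \<and> f (dn x) = dn' (f x) \<and> f (bar x) = bar' (f x))"

definition graph_simplicial ::
  "'a set \<Rightarrow> ('a \<Rightarrow> 'a) \<Rightarrow> 'b set \<Rightarrow> ('b \<Rightarrow> 'b) \<Rightarrow> ('a \<Rightarrow> 'b) \<Rightarrow> bool" where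
  "graph_simplicial C dn C' dn' f \<longleftrightarrow>
     (\<forall>x\<in>C. x \<notin> gverts C dn \<longrightarrow> f x \<notin> gverts C' dn')"

text \<open>grp x = G_x; hdn x : G_x \<rightarrow> G_{x^-} is g \<mapsto> g^-; hbar x : G_x \<rightarrow> G_{xbar} is g \<mapsto> gbar.\<close>

record ('a, 'g) gog =
  gcar :: "'a set"
  edn  :: "'a \<Rightarrow> 'a"
  ebar :: "'a \<Rightarrow> 'a"
  grp  :: "'a \<Rightarrow> 'g monoid"
  hdn  :: "'a \<Rightarrow> 'g \<Rightarrow> 'g"
  hbar :: "'a \<Rightarrow> 'g \<Rightarrow> 'g"

definition Vx :: "('a, 'g) gog \<Rightarrow> 'a set" where
  "Vx X = gverts (gcar X) (edn X)"

definition Ex_of :: "('a, 'g) gog \<Rightarrow> 'a set" where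
  "Ex_of X = gcar X - Vx X"

definition eup :: "('a, 'g) gog \<Rightarrow> 'a \<Rightarrow> 'a" where
  "eup X x = edn X (ebar X x)"

definition is_gog :: "('a, 'g) gog \<Rightarrow> bool" where
  "is_gog X \<longleftrightarrow>
     is_graph (gcar X) (edn X) (ebar X) \<and> graph_connected (gcar X) (edn X) (ebar X) \<and>
     (\<forall>x\<in>gcar X. group (grp X x)
        \<and> hdn X x \<in> hom (grp X x) (grp X (edn X x))
        \<and> hbar X x \<in> hom (grp X x) (grp X (ebar X x))
        \<and> (\<forall>g\<in>carrier (grp X x). hbar X (ebar X x) (hbar X x g) = g)) \<and>
     (\<forall>v\<in>Vx X. \<forall>g\<in>carrier (grp X v). hdn X v g = g \<and> hbar X v g = g)"

datatype ('a, 'g) letter = Gen 'a | Elt 'a 'g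

text \<open>Words are read left to right: Gen x goes from x^- to x^+; Elt v g is a loop at v.
  gwalk X v w t: the word w is a path from v to t.\<close>

fun gwalk :: "('a, 'g) gog \<Rightarrow> 'a \<Rightarrow> ('a, 'g) letter list \<Rightarrow> 'a \<Rightarrow> bool" where
  "gwalk X v [] t \<longleftrightarrow> v \<in> Vx X \<and> v = t"
| "gwalk X v (Gen x # ws) t \<longleftrightarrow> x \<in> gcar X \<and> edn X x = v \<and> gwalk X (eup X x) ws t"
| "gwalk X v (Elt u g # ws) t \<longleftrightarrow> u \<in> Vx X \<and> u = v \<and> g \<in> carrier (grp X u) \<and> gwalk X v ws t"

definition brel :: "('a, 'g) gog \<Rightarrow> ('a, 'g) letter list \<Rightarrow> ('a, 'g) letter list \<Rightarrow> bool" where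
  "brel X l r \<longleftrightarrow>
     (\<exists>v\<in>Vx X. \<exists>g\<in>carrier (grp X v). \<exists>h\<in>carrier (grp X v).
         l = [Elt v g, Elt v h] \<and> r = [Elt v (g \<otimes>\<^bsub>grp X v\<^esub> h)])
   \<or> (\<exists>v\<in>Vx X. l = [Elt v \<one>\<^bsub>grp X v\<^esub>] \<and> r = [])
   \<or> (\<exists>v\<in>Vx X. l = [Gen v] \<and> r = [])
   \<or> (\<exists>x\<in>gcar X. l = [Gen x, Gen (ebar X x)] \<and> r = [])
   \<or> (\<exists>x\<in>gcar X. \<exists>g\<in>carrier (grp X x).
         l = [Elt (edn X x) (hdn X x g), Gen x]
       \<and> r = [Gen x, Elt (eup X x) (hdn X (ebar X x) (hbar X x g))])"

definition gstep :: "('a, 'g) gog \<Rightarrow> 'a \<Rightarrow> ('a, 'g) letter list \<Rightarrow> ('a, 'g) letter list \<Rightarrow> bool" where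
  "gstep X v a b \<longleftrightarrow>
     (\<exists>u l r w. brel X l r \<and>
        ((a = u @ l @ w \<and> b = u @ r @ w) \<or> (a = u @ r @ w \<and> b = u @ l @ w)))
     \<and> (\<exists>t. gwalk X v a t) \<and> (\<exists>t. gwalk X v b t)"

definition gcls :: "('a, 'g) gog \<Rightarrow> 'a \<Rightarrow> ('a, 'g) letter list \<Rightarrow> ('a, 'g) letter list set" where
  "gcls X v a = {b. (gstep X v)\<^sup>*\<^sup>* a b}"

type_synonym ('a, 'g) gmor = "'a \<times> ('a, 'g) letter list set"

definition pi1 :: "('a, 'g) gog \<Rightarrow> 'a \<Rightarrow> 'a \<Rightarrow> ('a, 'g) gmor set" where
  "pi1 X v w = {(v, gcls X v a) | a. gwalk X v a w}"

definition gcomp :: "('a, 'g) gog \<Rightarrow> ('a, 'g) gmor \<Rightarrow> ('a, 'g) gmor \<Rightarrow> ('a, 'g) gmor" where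
  "gcomp X m n = (fst m, \<Union>{gcls X (fst m) (a @ b) | a b. a \<in> snd m \<and> b \<in> snd n})"

definition gel :: "('a, 'g) gog \<Rightarrow> 'a \<Rightarrow> 'g \<Rightarrow> ('a, 'g) gmor" where
  "gel X v g = (v, gcls X v [Elt v g])"

definition ggen :: "('a, 'g) gog \<Rightarrow> 'a \<Rightarrow> ('a, 'g) gmor" where
  "ggen X x = (edn X x, gcls X (edn X x) [Gen x])"

record ('b, 'c, 'y, 'x, 'gy, 'gx) gbs =
  bcar :: "'b set"
  bdn  :: "'b \<Rightarrow> 'b"
  bbar :: "'b \<Rightarrow> 'b"
  lam  :: "'b \<Rightarrow> 'y"
  rho  :: "'b \<Rightarrow> 'x"
  bset :: "'b \<Rightarrow> 'c set"
  lact :: "'b \<Rightarrow> 'gy \<Rightarrow> 'c \<Rightarrow> 'c"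
  ract :: "'b \<Rightarrow> 'c \<Rightarrow> 'gx \<Rightarrow> 'c"
  cdn  :: "'b \<Rightarrow> 'c \<Rightarrow> 'c"
  cbar :: "'b \<Rightarrow> 'c \<Rightarrow> 'c"

definition is_biset ::
  "'g monoid \<Rightarrow> 'h monoid \<Rightarrow> 'c set \<Rightarrow> ('g \<Rightarrow> 'c \<Rightarrow> 'c) \<Rightarrow> ('c \<Rightarrow> 'h \<Rightarrow> 'c) \<Rightarrow> bool" where
  "is_biset G H S l r \<longleftrightarrow>
     (\<forall>g\<in>carrier G. \<forall>s\<in>S. l g s \<in> S) \<and> (\<forall>s\<in>S. l \<one>\<^bsub>G\<^esub> s = s) \<and>
     (\<forall>g1\<in>carrier G. \<forall>g2\<in>carrier G. \<forall>s\<in>S. l (g1 \<otimes>\<^bsub>G\<^esub> g2) s = l g1 (l g2 s)) \<and>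
     (\<forall>h\<in>carrier H. \<forall>s\<in>S. r s h \<in> S) \<and> (\<forall>s\<in>S. r s \<one>\<^bsub>H\<^esub> = s) \<and>
     (\<forall>h1\<in>carrier H. \<forall>h2\<in>carrier H. \<forall>s\<in>S. r s (h1 \<otimes>\<^bsub>H\<^esub> h2) = r (r s h1) h2) \<and>
     (\<forall>g\<in>carrier G. \<forall>h\<in>carrier H. \<forall>s\<in>S. l g (r s h) = r (l g s) h)"

definition Vb :: "('b, 'c, 'y, 'x, 'gy, 'gx) gbs \<Rightarrow> 'b set" where
  "Vb B = gverts (bcar B) (bdn B)"

definition bup :: "('b, 'c, 'y, 'x, 'gy, 'gx) gbs \<Rightarrow> 'b \<Rightarrow> 'b" where
  "bup B z = bdn B (bbar B z)"

definition cup :: "('b, 'c, 'y, 'x, 'gy, 'gx) gbs \<Rightarrow> 'b \<Rightarrow> 'c \<Rightarrow> 'c" where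
  "cup B z b = cdn B (bbar B z) (cbar B z b)"

definition is_gbs ::
  "('y, 'gy) gog \<Rightarrow> ('x, 'gx) gog \<Rightarrow> ('b, 'c, 'y, 'x, 'gy, 'gx) gbs \<Rightarrow> bool" where
  "is_gbs Y X B \<longleftrightarrow>
     is_graph (bcar B) (bdn B) (bbar B) \<and>
     graph_mor (bcar B) (bdn B) (bbar B) (gcar Y) (edn Y) (ebar Y) (lam B) \<and>
     graph_mor (bcar B) (bdn B) (bbar B) (gcar X) (edn X) (ebar X) (rho B) \<and>
     (\<forall>z\<in>bcar B. is_biset (grp Y (lam B z)) (grp X (rho B z)) (bset B z) (lact B z) (ract B z)) \<and>
     (\<forall>z\<in>bcar B. \<forall>b\<in>bset B z.
        cdn B z b \<in> bset B (bdn B z) \<and> cbar B z b \<in> bset B (bbar B z) \<and>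
        cbar B (bbar B z) (cbar B z b) = b) \<and>
     (\<forall>z\<in>bcar B. \<forall>b\<in>bset B z. \<forall>h\<in>carrier (grp Y (lam B z)).
        cdn B z (lact B z h b) = lact B (bdn B z) (hdn Y (lam B z) h) (cdn B z b) \<and>
        cbar B z (lact B z h b) = lact B (bbar B z) (hbar Y (lam B z) h) (cbar B z b)) \<and>
     (\<forall>z\<in>bcar B. \<forall>b\<in>bset B z. \<forall>g\<in>carrier (grp X (rho B z)).
        cdn B z (ract B z b g) = ract B (bdn B z) (cdn B z b) (hdn X (rho B z) g) \<and>
        cbar B z (ract B z b g) = ract B (bbar B z) (cbar B z b) (hbar X (rho B z) g)) \<and>
     (\<forall>z\<in>Vb B. \<forall>b\<in>bset B z. cdn B z b = b \<and> cbar B z b = b)"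

text \<open>The biset G_{lam v} (x)_{G_{lam e}} B_e, realised as classes of pairs (g,b) under
  (g h^-, b) ~ (g, h b).\<close>

definition fstep ::
  "('y, 'gy) gog \<Rightarrow> ('b, 'c, 'y, 'x, 'gy, 'gx) gbs \<Rightarrow> 'b \<Rightarrow> 'b \<Rightarrow> 'gy \<times> 'c \<Rightarrow> 'gy \<times> 'c \<Rightarrow> bool" where
  "fstep Y B v e s t \<longleftrightarrow>
     fst s \<in> carrier (grp Y (lam B v)) \<and> fst t \<in> carrier (grp Y (lam B v)) \<and>
     snd s \<in> bset B e \<and> snd t \<in> bset B e \<and>
     (\<exists>h\<in>carrier (grp Y (lam B e)).
        fst s = fst t \<otimes>\<^bsub>grp Y (lam B v)\<^esub> hdn Y (lam B e) h \<and> snd t = lact B e h (snd s))"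

definition fcls ::
  "('y, 'gy) gog \<Rightarrow> ('b, 'c, 'y, 'x, 'gy, 'gx) gbs \<Rightarrow> 'b \<Rightarrow> 'b \<Rightarrow> 'gy \<times> 'c \<Rightarrow> ('gy \<times> 'c) set" where
  "fcls Y B v e s = {t. (\<lambda>a b. fstep Y B v e a b \<or> fstep Y B v e b a)\<^sup>*\<^sup>* s t}"

definition fdom ::
  "('y, 'gy) gog \<Rightarrow> ('b, 'c, 'y, 'x, 'gy, 'gx) gbs \<Rightarrow> 'b \<Rightarrow> 'x \<Rightarrow> ('b \<times> ('gy \<times> 'c) set) set" where
  "fdom Y B v f = {(e, fcls Y B v e (g, b)) | e g b.
      e \<in> bcar B \<and> rho B e = f \<and> bdn B e = v \<and> g \<in> carrier (grp Y (lam B v)) \<and> b \<in> bset B e}"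

definition fmap ::
  "('b, 'c, 'y, 'x, 'gy, 'gx) gbs \<Rightarrow> 'b \<Rightarrow> 'b \<times> ('gy \<times> 'c) set \<Rightarrow> 'c" where
  "fmap B v ec = (case (SOME t. t \<in> snd ec) of (g, b) \<Rightarrow> lact B v g (cdn B (fst ec) b))"

definition left_fibrant ::
  "('y, 'gy) gog \<Rightarrow> ('x, 'gx) gog \<Rightarrow> ('b, 'c, 'y, 'x, 'gy, 'gx) gbs \<Rightarrow> bool" where
  "left_fibrant Y X B \<longleftrightarrow>
     graph_simplicial (bcar B) (bdn B) (gcar X) (edn X) (rho B) \<and>
     (\<forall>v\<in>Vb B. \<forall>f\<in>Ex_of X. edn X f = rho B v \<longrightarrow>
        bij_betw (fmap B v) (fdom Y B v f) (bset B v) \<and>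
        (\<forall>ec\<in>fdom Y B v f. \<forall>g'\<in>carrier (grp Y (lam B v)).
           fmap B v (fst ec, \<Union>{fcls Y B v (fst ec) (g' \<otimes>\<^bsub>grp Y (lam B v)\<^esub> g, b) | g b. (g, b) \<in> snd ec})
             = lact B v g' (fmap B v ec)) \<and>
        (\<forall>ec\<in>fdom Y B v f. \<forall>k\<in>carrier (grp X f).
           fmap B v (fst ec, \<Union>{fcls Y B v (fst ec) (g, ract B (fst ec) b k) | g b. (g, b) \<in> snd ec})
             = ract B v (fmap B v ec) (hdn X f k)))"

type_synonym ('y, 'gy, 'c, 'x, 'gx) triple = "('y, 'gy) gmor \<times> 'c \<times> ('x, 'gx) gmor"

definition tdom ::
  "('y, 'gy) gog \<Rightarrow> ('x, 'gx) gog \<Rightarrow> ('b, 'c, 'y, 'x, 'gy, 'gx) gbs \<Rightarrow> 'y \<Rightarrow> 'x \<Rightarrow> 'b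
   \<Rightarrow> ('y, 'gy, 'c, 'x, 'gx) triple \<Rightarrow> bool" where
  "tdom Y X B dag st z s \<longleftrightarrow> z \<in> Vb B \<and> fst s \<in> pi1 Y dag (lam B z) \<and>
      fst (snd s) \<in> bset B z \<and> snd (snd s) \<in> pi1 X (rho B z) st"

text \<open>Balancing relations of the tensor product
  pi1(Y,dag,lam z) (x) B_z (x) pi1(X,rho z,st) over G_{lam z} and G_{rho z}.\<close>

definition tstep ::
  "('y, 'gy) gog \<Rightarrow> ('x, 'gx) gog \<Rightarrow> ('b, 'c, 'y, 'x, 'gy, 'gx) gbs \<Rightarrow> 'y \<Rightarrow> 'x \<Rightarrow> 'b
   \<Rightarrow> ('y, 'gy, 'c, 'x, 'gx) triple \<Rightarrow> ('y, 'gy, 'c, 'x, 'gx) triple \<Rightarrow> bool" where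
  "tstep Y X B dag st z s t \<longleftrightarrow> tdom Y X B dag st z s \<and> tdom Y X B dag st z t \<and>
     ((\<exists>h\<in>carrier (grp Y (lam B z)).
         fst s = gcomp Y (fst t) (gel Y (lam B z) h) \<and>
         fst (snd t) = lact B z h (fst (snd s)) \<and> snd (snd t) = snd (snd s))
    \<or> (\<exists>g\<in>carrier (grp X (rho B z)).
         fst t = fst s \<and> fst (snd s) = ract B z (fst (snd t)) g \<and>
         snd (snd t) = gcomp X (gel X (rho B z) g) (snd (snd s))))"

definition tcls ::
  "('y, 'gy) gog \<Rightarrow> ('x, 'gx) gog \<Rightarrow> ('b, 'c, 'y, 'x, 'gy, 'gx) gbs \<Rightarrow> 'y \<Rightarrow> 'x \<Rightarrow> 'b
   \<Rightarrow> ('y, 'gy, 'c, 'x, 'gx) triple \<Rightarrow> ('y, 'gy, 'c, 'x, 'gx) triple set" where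
  "tcls Y X B dag st z s = {t. (\<lambda>a b. tstep Y X B dag st z a b \<or> tstep Y X B dag st z b a)\<^sup>*\<^sup>* s t}"

definition Sset ::
  "('y, 'gy) gog \<Rightarrow> ('x, 'gx) gog \<Rightarrow> ('b, 'c, 'y, 'x, 'gy, 'gx) gbs \<Rightarrow> 'y \<Rightarrow> 'x
   \<Rightarrow> ('b \<times> ('y, 'gy, 'c, 'x, 'gx) triple set) set" where
  "Sset Y X B dag st = {(z, tcls Y X B dag st z s) | z s. tdom Y X B dag st z s}"

definition sstep ::
  "('y, 'gy) gog \<Rightarrow> ('x, 'gx) gog \<Rightarrow> ('b, 'c, 'y, 'x, 'gy, 'gx) gbs \<Rightarrow> 'y \<Rightarrow> 'x
   \<Rightarrow> 'b \<times> ('y, 'gy, 'c, 'x, 'gx) triple set \<Rightarrow> 'b \<times> ('y, 'gy, 'c, 'x, 'gx) triple set \<Rightarrow> bool" where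
  "sstep Y X B dag st s t \<longleftrightarrow>
     (\<exists>z\<in>bcar B - Vb B. \<exists>b\<in>bset B z.
      \<exists>q\<in>pi1 Y dag (edn Y (lam B z)). \<exists>p\<in>pi1 X (edn X (rho B z)) st.
        s = (bdn B z, tcls Y X B dag st (bdn B z) (q, cdn B z b, p)) \<and>
        t = (bup B z, tcls Y X B dag st (bup B z)
               (gcomp Y q (ggen Y (lam B z)), cup B z b, gcomp X (ggen X (ebar X (rho B z))) p)))"

definition simS ::
  "('y, 'gy) gog \<Rightarrow> ('x, 'gx) gog \<Rightarrow> ('b, 'c, 'y, 'x, 'gy, 'gx) gbs \<Rightarrow> 'y \<Rightarrow> 'x
   \<Rightarrow> 'b \<times> ('y, 'gy, 'c, 'x, 'gx) triple set \<Rightarrow> 'b \<times> ('y, 'gy, 'c, 'x, 'gx) triple set \<Rightarrow> bool" where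
  "simS Y X B dag st s t \<longleftrightarrow> s \<in> Sset Y X B dag st \<and> t \<in> Sset Y X B dag st \<and>
     (\<lambda>a b. sstep Y X B dag st a b \<or> sstep Y X B dag st b a)\<^sup>*\<^sup>* s t"

definition Sp ::
  "('y, 'gy) gog \<Rightarrow> ('x, 'gx) gog \<Rightarrow> ('b, 'c, 'y, 'x, 'gy, 'gx) gbs \<Rightarrow> 'y \<Rightarrow> 'x \<Rightarrow> 'x
   \<Rightarrow> ('x, 'gx) gmor \<Rightarrow> ('b \<times> ('y, 'gy, 'c, 'x, 'gx) triple set) set" where
  "Sp Y X B dag st x p = {(z, tcls Y X B dag st z (q, b, p)) | z q b.
      z \<in> Vb B \<and> rho B z = x \<and> q \<in> pi1 Y dag (lam B z) \<and> b \<in> bset B z}"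

definition Sact ::
  "('y, 'gy) gog \<Rightarrow> ('x, 'gx) gog \<Rightarrow> ('b, 'c, 'y, 'x, 'gy, 'gx) gbs \<Rightarrow> 'y \<Rightarrow> 'x
   \<Rightarrow> ('y, 'gy) gmor \<Rightarrow> 'b \<times> ('y, 'gy, 'c, 'x, 'gx) triple set
   \<Rightarrow> 'b \<times> ('y, 'gy, 'c, 'x, 'gx) triple set" where
  "Sact Y X B dag st r s = (fst s,
      \<Union>{tcls Y X B dag st (fst s) (gcomp Y r q, b, p) | q b p. (q, b, p) \<in> snd s})"

end

theory Submission
  imports Defs
begin



lemma hom_in: "h \<in> hom G H \<Longrightarrow> x \<in> carrier G \<Longrightarrow> h x \<in> carrier H"
  by (auto simp: hom_def)

lemma Vx_iff: "v \<in> Vx G \<longleftrightarrow> v \<in> gcar G \<and> edn G v = v"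
  by (simp add: Vx_def gverts_def)

lemma gog_graph:
  assumes "is_gog G" "x \<in> gcar G"
  shows "ebar G x \<in> gcar G" "edn G x \<in> gcar G" "ebar G (ebar G x) = x"
    "edn G (edn G x) = edn G x" "(x = edn G x) \<longleftrightarrow> (x = ebar G x)"
  using assms by (auto simp: is_gog_def is_graph_def)

lemma gog_grp:
  assumes "is_gog G" "x \<in> gcar G"
  shows "group (grp G x)" "hdn G x \<in> hom (grp G x) (grp G (edn G x))"
    "hbar G x \<in> hom (grp G x) (grp G (ebar G x))"
    "g \<in> carrier (grp G x) \<Longrightarrow> hbar G (ebar G x) (hbar G x g) = g"
  using assms by (auto simp: is_gog_def)

lemma gog_Vx_hom:
  assumes "is_gog G" "v \<in> Vx G" "g \<in> carrier (grp G v)"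
  shows "hdn G v g = g" "hbar G v g = g"
  using assms by (auto simp: is_gog_def)

lemma edn_Vx: "is_gog G \<Longrightarrow> x \<in> gcar G \<Longrightarrow> edn G x \<in> Vx G"
  by (simp add: Vx_iff gog_graph)

lemma eup_Vx: "is_gog G \<Longrightarrow> x \<in> gcar G \<Longrightarrow> eup G x \<in> Vx G"
  by (simp add: eup_def edn_Vx gog_graph)

lemma Vx_ebar: "is_gog G \<Longrightarrow> v \<in> Vx G \<Longrightarrow> ebar G v = v"
  using gog_graph(5)[of G v] by (auto simp: Vx_iff)

lemma Vx_eup: "is_gog G \<Longrightarrow> v \<in> Vx G \<Longrightarrow> eup G v = v"
  by (simp add: eup_def Vx_ebar) (simp add: Vx_iff)

lemma eup_ebar: "is_gog G \<Longrightarrow> x \<in> gcar G \<Longrightarrow> eup G (ebar G x) = edn G x"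
  by (simp add: eup_def gog_graph)

lemma edge_ebar: "is_gog G \<Longrightarrow> x \<in> gcar G \<Longrightarrow> x \<notin> Vx G \<Longrightarrow> ebar G x \<in> gcar G \<and> ebar G x \<notin> Vx G"
  using gog_graph[of G x] gog_graph[of G "ebar G x"] by (auto simp: Vx_iff)

lemma gwalk_start: "is_gog G \<Longrightarrow> gwalk G v a t \<Longrightarrow> v \<in> Vx G"
  by (cases a rule: list.exhaust; cases "hd a") (auto simp: edn_Vx)

lemma gwalk_end: "gwalk G v a t \<Longrightarrow> t \<in> Vx G"
proof (induction a arbitrary: v)
  case (Cons l a) then show ?case by (cases l) auto
qed simp

lemma gwalk_append:
  assumes "is_gog G"
  shows "gwalk G v (a @ b) t \<longleftrightarrow> (\<exists>m. gwalk G v a m \<and> gwalk G m b t)"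
proof (induction a arbitrary: v)
  case Nil then show ?case using gwalk_start[OF assms] by auto
next
  case (Cons l a) then show ?case by (cases l) auto
qed

lemma gwalk_unique: "gwalk G v a t \<Longrightarrow> gwalk G v a t' \<Longrightarrow> t = t'"
proof (induction a arbitrary: v)
  case (Cons l a) then show ?case by (cases l) auto
qed simp

lemma bw1:
  assumes G: "is_gog G" and W: "gwalk G m [Elt v g, Elt v h] k" and v: "v \<in> Vx G"
    and g: "g \<in> carrier (grp G v)" and h: "h \<in> carrier (grp G v)"
  shows "gwalk G m [Elt v (g \<otimes>\<^bsub>grp G v\<^esub> h)] k"
proof -
  have "group (grp G v)" using v G by (auto simp: Vx_iff gog_grp)
  then have "g \<otimes>\<^bsub>grp G v\<^esub> h \<in> carrier (grp G v)" using g h by (simp add: group.is_monoid monoid.m_closed)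
  then show ?thesis using W by auto
qed

lemma bw2:
  assumes W: "gwalk G m [Elt v g] k"
  shows "gwalk G m [] k"
  using W by auto

lemma bw3:
  assumes G: "is_gog G" and W: "gwalk G m [Gen v] k" and v: "v \<in> Vx G"
  shows "gwalk G m [] k"
proof -
  have "eup G v = v" "edn G v = v" using Vx_eup[OF G v] v by (auto simp: Vx_iff)
  then show ?thesis using W v by auto
qed

lemma bw4:
  assumes G: "is_gog G" and W: "gwalk G m [Gen x, Gen (ebar G x)] k" and x: "x \<in> gcar G"
  shows "gwalk G m [] k"
proof -
  have e1: "eup G (ebar G x) = edn G x" using eup_ebar[OF G x] .
  have e2: "edn G x \<in> Vx G" using edn_Vx[OF G x] .
  have e3: "edn G x = m" "eup G (ebar G x) = k" using W unfolding gwalk.simps by blast+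
  show ?thesis unfolding gwalk.simps using e1 e2 e3 by metis
qed

lemma bw5:
  assumes G: "is_gog G" and W: "gwalk G m [Elt (edn G x) (hdn G x g), Gen x] k"
    and x: "x \<in> gcar G" and g: "g \<in> carrier (grp G x)"
  shows "gwalk G m [Gen x, Elt (eup G x) (hdn G (ebar G x) (hbar G x g))] k"
proof -
  have 2: "hbar G x g \<in> carrier (grp G (ebar G x))" using hom_in[OF gog_grp(3)[OF G x] g] .
  have 3: "hdn G (ebar G x) (hbar G x g) \<in> carrier (grp G (eup G x))"
    using hom_in[OF gog_grp(2)[OF G gog_graph(1)[OF G x]] 2] unfolding eup_def .
  have 4: "eup G x \<in> Vx G" using eup_Vx[OF G x] .
  have e: "edn G x = m" "eup G x = k" using W by auto
  show ?thesis using e x 3 4 by auto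
qed

lemma brel_cases:
  assumes "brel G l r"
  obtains (c1) v g h where "v \<in> Vx G" "g \<in> carrier (grp G v)" "h \<in> carrier (grp G v)"
      "l = [Elt v g, Elt v h]" "r = [Elt v (g \<otimes>\<^bsub>grp G v\<^esub> h)]"
  | (c2) v where "v \<in> Vx G" "l = [Elt v \<one>\<^bsub>grp G v\<^esub>]" "r = []"
  | (c3) v where "v \<in> Vx G" "l = [Gen v]" "r = []"
  | (c4) x where "x \<in> gcar G" "l = [Gen x, Gen (ebar G x)]" "r = []"
  | (c5) x g where "x \<in> gcar G" "g \<in> carrier (grp G x)"
      "l = [Elt (edn G x) (hdn G x g), Gen x]"
      "r = [Gen x, Elt (eup G x) (hdn G (ebar G x) (hbar G x g))]"
  using assms unfolding brel_def by blast

lemma brel_walk: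
  assumes G: "is_gog G" and "brel G l r" and W: "gwalk G m l k"
  shows "gwalk G m r k"
  using assms(2)
proof (cases rule: brel_cases)
  case (c1 v g h)
  from W c1(4) have "gwalk G m [Elt v g, Elt v h] k" by (simp only:)
  from bw1[OF G this c1(1-3)] c1(5) show ?thesis by (simp only:)
next
  case (c2 v)
  from W c2(2) have "gwalk G m [Elt v \<one>\<^bsub>grp G v\<^esub>] k" by (simp only:)
  from bw2[OF this] c2(3) show ?thesis by (simp only:)
next
  case (c3 v)
  from W c3(2) have "gwalk G m [Gen v] k" by (simp only:)
  from bw3[OF G this c3(1)] c3(3) show ?thesis by (simp only:)
next
  case (c4 x)
  from W c4(2) have "gwalk G m [Gen x, Gen (ebar G x)] k" by (simp only:)
  from bw4[OF G this c4(1)] c4(3) show ?thesis by (simp only:)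
next
  case (c5 x g)
  from W c5(3) have "gwalk G m [Elt (edn G x) (hdn G x g), Gen x] k" by (simp only:)
  from bw5[OF G this c5(1,2)] c5(4) show ?thesis by (simp only:)
qed

lemma gstep_sym: "gstep G v a b \<Longrightarrow> gstep G v b a"
proof -
  assume "gstep G v a b"
  then obtain u l r w where br: "brel G l r" and
    e: "(a = u @ l @ w \<and> b = u @ r @ w) \<or> (a = u @ r @ w \<and> b = u @ l @ w)"
    and t: "\<exists>t. gwalk G v a t" "\<exists>t. gwalk G v b t"
    unfolding gstep_def by blast
  have "(b = u @ l @ w \<and> a = u @ r @ w) \<or> (b = u @ r @ w \<and> a = u @ l @ w)" using e by blast
  then show ?thesis unfolding gstep_def using br t by blast
qed

lemma walk3:
  assumes G: "is_gog G"
  shows "gwalk G v (u @ l @ w) t \<longleftrightarrow> (\<exists>m k. gwalk G v u m \<and> gwalk G m l k \<and> gwalk G k w t)"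
  unfolding gwalk_append[OF G] by blast

lemma gstep_walk1:
  assumes G: "is_gog G" and "gstep G v a b" and "gwalk G v a t"
  shows "gwalk G v b t"
proof -
  obtain u l r w where br: "brel G l r" and
    e: "(a = u @ l @ w \<and> b = u @ r @ w) \<or> (a = u @ r @ w \<and> b = u @ l @ w)"
    using assms(2) unfolding gstep_def by blast
  obtain t' where bt: "gwalk G v b t'" using assms(2) unfolding gstep_def by blast
  show ?thesis using e
  proof
    assume h: "a = u @ l @ w \<and> b = u @ r @ w"
    have "gwalk G v (u @ l @ w) t" using assms(3) h by simp
    then obtain m k where 1: "gwalk G v u m" "gwalk G m l k" "gwalk G k w t"
      unfolding walk3[OF G] by blast
    have "gwalk G m r k" using brel_walk[OF G br 1(2)] .
    then have "gwalk G v (u @ r @ w) t" unfolding walk3[OF G] using 1 by blast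
    then show ?thesis using h by simp
  next
    assume h: "a = u @ r @ w \<and> b = u @ l @ w"
    have "gwalk G v (u @ l @ w) t'" using bt h by simp
    then obtain m k where 1: "gwalk G v u m" "gwalk G m l k" "gwalk G k w t'"
      unfolding walk3[OF G] by blast
    have "gwalk G m r k" using brel_walk[OF G br 1(2)] .
    then have "gwalk G v (u @ r @ w) t'" unfolding walk3[OF G] using 1 by blast
    then have "gwalk G v a t'" using h by simp
    then have "t = t'" using assms(3) gwalk_unique by metis
    then show ?thesis using bt by simp
  qed
qed

lemma gstep_walk:
  assumes G: "is_gog G" and "gstep G v a b"
  shows "gwalk G v a t \<longleftrightarrow> gwalk G v b t"
  using gstep_walk1[OF G assms(2)] gstep_walk1[OF G gstep_sym[OF assms(2)]] by blast

lemma gequiv_walk: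
  assumes G: "is_gog G" and "(gstep G v)\<^sup>*\<^sup>* a b"
  shows "gwalk G v a t \<longleftrightarrow> gwalk G v b t"
  using assms(2)
proof (induction rule: rtranclp_induct)
  case (step b c)
  show ?case using step(3) gstep_walk[OF G step(2)] by (rule trans)
qed simp

lemma gequiv_sym: "(gstep G v)\<^sup>*\<^sup>* a b \<Longrightarrow> (gstep G v)\<^sup>*\<^sup>* b a"
proof (induction rule: rtranclp_induct)
  case (step b c)
  show ?case by (rule converse_rtranclp_into_rtranclp[OF gstep_sym[OF step(2)] step(3)])
qed simp

lemma gcls_mem: "b \<in> gcls G v a \<longleftrightarrow> (gstep G v)\<^sup>*\<^sup>* a b"
  by (simp add: gcls_def)

lemma gcls_self: "a \<in> gcls G v a"
  by (simp add: gcls_def)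

lemma gcls_eq:
  assumes "(gstep G v)\<^sup>*\<^sup>* a b"
  shows "gcls G v a = gcls G v b"
proof -
  have 1: "(gstep G v)\<^sup>*\<^sup>* b a" using gequiv_sym[OF assms] .
  have "\<And>c. (gstep G v)\<^sup>*\<^sup>* a c \<longleftrightarrow> (gstep G v)\<^sup>*\<^sup>* b c"
    using rtranclp_trans[OF assms] rtranclp_trans[OF 1] by blast
  then have "(gstep G v)\<^sup>*\<^sup>* a = (gstep G v)\<^sup>*\<^sup>* b" by (intro ext)
  then show ?thesis unfolding gcls_def by simp
qed

lemma gstep_app_right:
  assumes G: "is_gog G" and s: "gstep G v a a'" and wa: "gwalk G v a m" and wc: "gwalk G m c t"
  shows "gstep G v (a @ c) (a' @ c)"
proof -
  obtain u l r w where br: "brel G l r" and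
    e: "(a = u @ l @ w \<and> a' = u @ r @ w) \<or> (a = u @ r @ w \<and> a' = u @ l @ w)"
    using s unfolding gstep_def by blast
  have wa': "gwalk G v a' m" using gstep_walk[OF G s] wa by simp
  have "gwalk G v (a @ c) t" "gwalk G v (a' @ c) t"
    using wa wa' wc by (auto simp: gwalk_append[OF G])
  then show ?thesis unfolding gstep_def using br e
    by (intro conjI exI[of _ u] exI[of _ l] exI[of _ r] exI[of _ "w @ c"]) auto
qed

lemma gstep_app_left:
  assumes G: "is_gog G" and s: "gstep G m c c'" and wa: "gwalk G v a m"
  shows "gstep G v (a @ c) (a @ c')"
proof -
  obtain u l r w where br: "brel G l r" and
    e: "(c = u @ l @ w \<and> c' = u @ r @ w) \<or> (c = u @ r @ w \<and> c' = u @ l @ w)"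
    using s unfolding gstep_def by blast
  obtain t t' where "gwalk G m c t" "gwalk G m c' t'" using s unfolding gstep_def by blast
  then have "gwalk G v (a @ c) t" "gwalk G v (a @ c') t'"
    using wa by (auto simp: gwalk_append[OF G])
  then show ?thesis unfolding gstep_def using br e
    by (intro conjI exI[of _ "a @ u"] exI[of _ l] exI[of _ r] exI[of _ w]) auto
qed

lemma gequiv_app_right:
  assumes G: "is_gog G" and "(gstep G v)\<^sup>*\<^sup>* a a'" and "gwalk G v a m" and "gwalk G m c t"
  shows "(gstep G v)\<^sup>*\<^sup>* (a @ c) (a' @ c)"
  using assms(2)
proof (induction rule: rtranclp_induct)
  case (step b b')
  have "gwalk G v b m" using gequiv_walk[OF G step(1)] assms(3) by simp
  then show ?case using step gstep_app_right[OF G step(2) _ assms(4)] by (meson rtranclp.simps)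
qed simp

lemma gequiv_app_left:
  assumes G: "is_gog G" and "(gstep G m)\<^sup>*\<^sup>* c c'" and "gwalk G v a m"
  shows "(gstep G v)\<^sup>*\<^sup>* (a @ c) (a @ c')"
  using assms(2)
  by (induction rule: rtranclp_induct) (auto intro: rtranclp.rtrancl_into_rtrancl gstep_app_left[OF G _ assms(3)])

lemma gcomp_cls:
  assumes G: "is_gog G" and wa: "gwalk G v a w" and wb: "gwalk G w b t"
  shows "gcomp G (v, gcls G v a) (w, gcls G w b) = (v, gcls G v (a @ b))"
proof -
  have "\<And>a' b'. a' \<in> gcls G v a \<Longrightarrow> b' \<in> gcls G w b \<Longrightarrow> gcls G v (a' @ b') = gcls G v (a @ b)"
  proof -
    fix a' b' assume a': "a' \<in> gcls G v a" and b': "b' \<in> gcls G w b"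
    have wa': "gwalk G v a' w" using gequiv_walk[OF G] a' wa by (auto simp: gcls_mem)
    have "(gstep G v)\<^sup>*\<^sup>* (a @ b) (a' @ b)"
      using gequiv_app_right[OF G _ wa wb] a' by (simp add: gcls_mem)
    moreover have "(gstep G v)\<^sup>*\<^sup>* (a' @ b) (a' @ b')"
      using gequiv_app_left[OF G _ wa'] b' by (simp add: gcls_mem)
    ultimately show "gcls G v (a' @ b') = gcls G v (a @ b)"
      using gcls_eq by (metis rtranclp_trans)
  qed
  then have "\<Union>{gcls G v (a' @ b') | a' b'. a' \<in> gcls G v a \<and> b' \<in> gcls G w b} = gcls G v (a @ b)"
    using gcls_self[of a G v] gcls_self[of b G w] by blast
  then show ?thesis by (simp add: gcomp_def)
qed

lemma pi1_mem:
  assumes G: "is_gog G" and "p \<in> pi1 G v w" and "a \<in> snd p"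
  shows "gwalk G v a w \<and> p = (v, gcls G v a)"
proof -
  obtain a0 where a0: "gwalk G v a0 w" "p = (v, gcls G v a0)" using assms(2) by (auto simp: pi1_def)
  then have r: "(gstep G v)\<^sup>*\<^sup>* a0 a" using assms(3) by (simp add: gcls_mem)
  show ?thesis using a0 gequiv_walk[OF G r] gcls_eq[OF r] by simp
qed

lemma pi1_ex:
  assumes "p \<in> pi1 G v w"
  shows "\<exists>a. a \<in> snd p \<and> gwalk G v a w \<and> p = (v, gcls G v a)"
proof -
  obtain a where a: "gwalk G v a w" "p = (v, gcls G v a)" using assms by (auto simp: pi1_def)
  then show ?thesis using gcls_self[of a G v] by (intro exI[of _ a]) simp
qed

lemma pi1_I: "gwalk G v a w \<Longrightarrow> (v, gcls G v a) \<in> pi1 G v w"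
  by (auto simp: pi1_def)

lemma gcls_brel:
  assumes "brel G l r" "gwalk G v (u @ l @ w) t" "gwalk G v (u @ r @ w) t'"
  shows "gcls G v (u @ l @ w) = gcls G v (u @ r @ w)"
proof -
  have "gstep G v (u @ l @ w) (u @ r @ w)" using assms unfolding gstep_def by blast
  then show ?thesis by (intro gcls_eq) auto
qed




lemma Vb_iff: "z \<in> Vb B \<longleftrightarrow> z \<in> bcar B \<and> bdn B z = z"
  by (simp add: Vb_def gverts_def)

lemma Ex_of_iff: "f \<in> Ex_of X \<longleftrightarrow> f \<in> gcar X \<and> f \<notin> Vx X"
  by (simp add: Ex_of_def)

locale gbs_ctx =
  fixes Y :: "('y, 'gy) gog" and X :: "('x, 'gx) gog"
    and B :: "('b, 'c, 'y, 'x, 'gy, 'gx) gbs"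
  assumes Y: "is_gog Y" and X: "is_gog X" and B: "is_gbs Y X B" and LF: "left_fibrant Y X B"
begin

lemma bgraph:
  assumes "z \<in> bcar B"
  shows "bbar B z \<in> bcar B" "bdn B z \<in> bcar B" "bbar B (bbar B z) = z"
    "bdn B (bdn B z) = bdn B z" "(z = bdn B z) \<longleftrightarrow> (z = bbar B z)"
  using B assms by (auto simp: is_gbs_def is_graph_def)

lemma lam_mor:
  assumes "z \<in> bcar B"
  shows "lam B z \<in> gcar Y" "lam B (bdn B z) = edn Y (lam B z)" "lam B (bbar B z) = ebar Y (lam B z)"
  using B assms by (auto simp: is_gbs_def graph_mor_def)

lemma rho_mor:
  assumes "z \<in> bcar B"
  shows "rho B z \<in> gcar X" "rho B (bdn B z) = edn X (rho B z)" "rho B (bbar B z) = ebar X (rho B z)"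
  using B assms by (auto simp: is_gbs_def graph_mor_def)

lemma biset: "z \<in> bcar B \<Longrightarrow> is_biset (grp Y (lam B z)) (grp X (rho B z)) (bset B z) (lact B z) (ract B z)"
  using B by (auto simp: is_gbs_def)

lemma cmaps:
  assumes "z \<in> bcar B" "b \<in> bset B z"
  shows "cdn B z b \<in> bset B (bdn B z)" "cbar B z b \<in> bset B (bbar B z)"
    "cbar B (bbar B z) (cbar B z b) = b"
  using B assms by (auto simp: is_gbs_def)

lemma cmaps_lact:
  assumes "z \<in> bcar B" "b \<in> bset B z" "h \<in> carrier (grp Y (lam B z))"
  shows "cdn B z (lact B z h b) = lact B (bdn B z) (hdn Y (lam B z) h) (cdn B z b)"
    "cbar B z (lact B z h b) = lact B (bbar B z) (hbar Y (lam B z) h) (cbar B z b)"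
  using B assms unfolding is_gbs_def by blast+

lemma cmaps_ract:
  assumes "z \<in> bcar B" "b \<in> bset B z" "g \<in> carrier (grp X (rho B z))"
  shows "cdn B z (ract B z b g) = ract B (bdn B z) (cdn B z b) (hdn X (rho B z) g)"
    "cbar B z (ract B z b g) = ract B (bbar B z) (cbar B z b) (hbar X (rho B z) g)"
  using B assms unfolding is_gbs_def by blast+

lemma cmaps_V:
  assumes "z \<in> Vb B" "b \<in> bset B z"
  shows "cdn B z b = b" "cbar B z b = b"
  using B assms unfolding is_gbs_def by blast+

lemma Vb_lam: "z \<in> Vb B \<Longrightarrow> lam B z \<in> Vx Y"
  using lam_mor[of z] by (auto simp: Vb_iff Vx_iff)

lemma Vb_rho: "z \<in> Vb B \<Longrightarrow> rho B z \<in> Vx X"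
  using rho_mor[of z] by (auto simp: Vb_iff Vx_iff)

lemma bdn_Vb: "z \<in> bcar B \<Longrightarrow> bdn B z \<in> Vb B"
  using bgraph[of z] by (simp add: Vb_iff)

lemma bup_Vb: "z \<in> bcar B \<Longrightarrow> bup B z \<in> Vb B"
  unfolding bup_def using bgraph[of z] bdn_Vb by simp

lemma lam_bup: "z \<in> bcar B \<Longrightarrow> lam B (bup B z) = eup Y (lam B z)"
  unfolding bup_def eup_def using lam_mor bgraph by simp

lemma rho_bup: "z \<in> bcar B \<Longrightarrow> rho B (bup B z) = eup X (rho B z)"
  unfolding bup_def eup_def using rho_mor bgraph by simp

lemma bup_bbar: "z \<in> bcar B \<Longrightarrow> bup B (bbar B z) = bdn B z"
  unfolding bup_def using bgraph by simp

lemma cup_bset: "z \<in> bcar B \<Longrightarrow> b \<in> bset B z \<Longrightarrow> cup B z b \<in> bset B (bup B z)"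
  unfolding cup_def bup_def using cmaps bgraph by simp

lemma simplicial: "e \<in> bcar B \<Longrightarrow> e \<notin> Vb B \<Longrightarrow> rho B e \<notin> Vx X"
  using LF unfolding left_fibrant_def graph_simplicial_def Vb_def Vx_def by blast

lemma bij_fib: "v \<in> Vb B \<Longrightarrow> f \<in> Ex_of X \<Longrightarrow> edn X f = rho B v \<Longrightarrow>
    bij_betw (fmap B v) (fdom Y B v f) (bset B v)"
  using LF unfolding left_fibrant_def by blast

lemma edge_bbar: "e \<in> bcar B \<Longrightarrow> e \<notin> Vb B \<Longrightarrow> bbar B e \<in> bcar B \<and> bbar B e \<notin> Vb B"
  using bgraph[of e] bgraph[of "bbar B e"] by (auto simp: Vb_iff)

lemma lact_closed: "z \<in> bcar B \<Longrightarrow> h \<in> carrier (grp Y (lam B z)) \<Longrightarrow> b \<in> bset B z \<Longrightarrow> lact B z h b \<in> bset B z"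
  using biset[of z] unfolding is_biset_def by blast
lemma lact_one: "z \<in> bcar B \<Longrightarrow> b \<in> bset B z \<Longrightarrow> lact B z \<one>\<^bsub>grp Y (lam B z)\<^esub> b = b"
  using biset[of z] unfolding is_biset_def by blast
lemma lact_mult: "z \<in> bcar B \<Longrightarrow> g1 \<in> carrier (grp Y (lam B z)) \<Longrightarrow> g2 \<in> carrier (grp Y (lam B z)) \<Longrightarrow> b \<in> bset B z \<Longrightarrow>
   lact B z (g1 \<otimes>\<^bsub>grp Y (lam B z)\<^esub> g2) b = lact B z g1 (lact B z g2 b)"
  using biset[of z] unfolding is_biset_def by blast
lemma ract_closed: "z \<in> bcar B \<Longrightarrow> h \<in> carrier (grp X (rho B z)) \<Longrightarrow> b \<in> bset B z \<Longrightarrow> ract B z b h \<in> bset B z"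
  using biset[of z] unfolding is_biset_def by blast
lemma ract_one: "z \<in> bcar B \<Longrightarrow> b \<in> bset B z \<Longrightarrow> ract B z b \<one>\<^bsub>grp X (rho B z)\<^esub> = b"
  using biset[of z] unfolding is_biset_def by blast
lemma ract_mult: "z \<in> bcar B \<Longrightarrow> h1 \<in> carrier (grp X (rho B z)) \<Longrightarrow> h2 \<in> carrier (grp X (rho B z)) \<Longrightarrow> b \<in> bset B z \<Longrightarrow>
   ract B z b (h1 \<otimes>\<^bsub>grp X (rho B z)\<^esub> h2) = ract B z (ract B z b h1) h2"
  using biset[of z] unfolding is_biset_def by blast
lemma lr_comm: "z \<in> bcar B \<Longrightarrow> g \<in> carrier (grp Y (lam B z)) \<Longrightarrow> h \<in> carrier (grp X (rho B z)) \<Longrightarrow> b \<in> bset B z \<Longrightarrow>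
   lact B z g (ract B z b h) = ract B z (lact B z g b) h"
  using biset[of z] unfolding is_biset_def by blast

end



fun vst :: "('y, 'gy) gog \<Rightarrow> ('b, 'c, 'y, 'x, 'gy, 'gx) gbs \<Rightarrow> 'y \<Rightarrow> 'x
   \<Rightarrow> 'b \<times> ('y, 'gy) letter list \<times> 'c \<Rightarrow> bool" where
  "vst Y B dag x (z, qw, b) \<longleftrightarrow> z \<in> Vb B \<and> rho B z = x \<and> gwalk Y dag qw (lam B z) \<and> b \<in> bset B z"

definition dec :: "('y, 'gy) gog \<Rightarrow> ('b, 'c, 'y, 'x, 'gy, 'gx) gbs \<Rightarrow> 'b \<Rightarrow> 'x \<Rightarrow> 'c
   \<Rightarrow> 'b \<times> ('gy \<times> 'c) set" where
  "dec Y B z f b = inv_into (fdom Y B z f) (fmap B z) b"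

definition out :: "('b, 'c, 'y, 'x, 'gy, 'gx) gbs \<Rightarrow> 'b \<Rightarrow> ('y, 'gy) letter list \<Rightarrow> 'b \<Rightarrow> 'gy \<times> 'c
   \<Rightarrow> 'b \<times> ('y, 'gy) letter list \<times> 'c" where
  "out B z qw e gb = (bup B e, qw @ [Elt (lam B z) (fst gb), Gen (lam B e)], cup B e (snd gb))"

fun lift1 :: "('x, 'gx) gog \<Rightarrow> ('y, 'gy) gog \<Rightarrow> ('b, 'c, 'y, 'x, 'gy, 'gx) gbs \<Rightarrow> ('x, 'gx) letter
   \<Rightarrow> 'b \<times> ('y, 'gy) letter list \<times> 'c \<Rightarrow> 'b \<times> ('y, 'gy) letter list \<times> 'c" where
  "lift1 X Y B (Elt u g) (z, qw, b) = (z, qw, ract B z b g)"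
| "lift1 X Y B (Gen f) (z, qw, b) = (if f \<in> Vx X then (z, qw, b)
      else out B z qw (fst (dec Y B z f b)) (SOME t. t \<in> snd (dec Y B z f b)))"

definition lift :: "('x, 'gx) gog \<Rightarrow> ('y, 'gy) gog \<Rightarrow> ('b, 'c, 'y, 'x, 'gy, 'gx) gbs \<Rightarrow> ('x, 'gx) letter list
   \<Rightarrow> 'b \<times> ('y, 'gy) letter list \<times> 'c \<Rightarrow> 'b \<times> ('y, 'gy) letter list \<times> 'c" where
  "lift X Y B a \<sigma> = fold (lift1 X Y B) a \<sigma>"

definition ystep :: "('y, 'gy) gog \<Rightarrow> ('b, 'c, 'y, 'x, 'gy, 'gx) gbs \<Rightarrow> 'y
   \<Rightarrow> 'b \<times> ('y, 'gy) letter list \<times> 'c \<Rightarrow> 'b \<times> ('y, 'gy) letter list \<times> 'c \<Rightarrow> bool" where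
  "ystep Y B dag \<sigma> \<tau> \<longleftrightarrow> (\<exists>z qw b qw' b'. \<sigma> = (z, qw, b) \<and> \<tau> = (z, qw', b') \<and> z \<in> Vb B \<and>
     gwalk Y dag qw (lam B z) \<and> gwalk Y dag qw' (lam B z) \<and> b \<in> bset B z \<and> b' \<in> bset B z \<and>
     ((gstep Y dag qw qw' \<and> b = b') \<or>
      (\<exists>h\<in>carrier (grp Y (lam B z)). qw = qw' @ [Elt (lam B z) h] \<and> b' = lact B z h b)))"

definition yeq :: "('y, 'gy) gog \<Rightarrow> ('b, 'c, 'y, 'x, 'gy, 'gx) gbs \<Rightarrow> 'y
   \<Rightarrow> 'b \<times> ('y, 'gy) letter list \<times> 'c \<Rightarrow> 'b \<times> ('y, 'gy) letter list \<times> 'c \<Rightarrow> bool" where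
  "yeq Y B dag = (\<lambda>\<sigma> \<tau>. ystep Y B dag \<sigma> \<tau> \<or> ystep Y B dag \<tau> \<sigma>)\<^sup>*\<^sup>*"

lemma lift_Nil[simp]: "lift X Y B [] \<sigma> = \<sigma>"
  by (simp add: lift_def)
lemma lift_Cons[simp]: "lift X Y B (l # a) \<sigma> = lift X Y B a (lift1 X Y B l \<sigma>)"
  by (simp add: lift_def)
lemma lift_append: "lift X Y B (a @ c) \<sigma> = lift X Y B c (lift X Y B a \<sigma>)"
  by (simp add: lift_def)

lemma yeq_refl: "yeq Y B dag \<sigma> \<sigma>"
  by (simp add: yeq_def)

lemma yeq_sym: "yeq Y B dag \<sigma> \<tau> \<Longrightarrow> yeq Y B dag \<tau> \<sigma>"
  unfolding yeq_def
proof (induction rule: rtranclp_induct)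
  case (step b c)
  have "(\<lambda>\<sigma> \<tau>. ystep Y B dag \<sigma> \<tau> \<or> ystep Y B dag \<tau> \<sigma>) c b" using step(2) by blast
  then show ?case using step(3) by (rule converse_rtranclp_into_rtranclp)
qed simp

lemma yeq_trans: "yeq Y B dag \<sigma> \<tau> \<Longrightarrow> yeq Y B dag \<tau> \<mu> \<Longrightarrow> yeq Y B dag \<sigma> \<mu>"
  unfolding yeq_def by (rule rtranclp_trans)

lemma ystep_yeq: "ystep Y B dag \<sigma> \<tau> \<Longrightarrow> yeq Y B dag \<sigma> \<tau>"
  unfolding yeq_def by (rule r_into_rtranclp) simp

lemma walk_app:
  assumes G: "is_gog G" and W: "gwalk G v qw m"
  shows "gwalk G v (qw @ ws) t \<longleftrightarrow> gwalk G m ws t"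
proof
  assume "gwalk G v (qw @ ws) t"
  then obtain m' where "gwalk G v qw m'" "gwalk G m' ws t" unfolding gwalk_append[OF G] by blast
  moreover have "m' = m" using gwalk_unique[OF W] calculation(1) by simp
  ultimately show "gwalk G m ws t" by simp
next
  assume "gwalk G m ws t"
  then show "gwalk G v (qw @ ws) t" unfolding gwalk_append[OF G] using W by blast
qed

lemma gstepI:
  assumes "brel G l r" "a = u @ l @ w" "b = u @ r @ w" "gwalk G v a t" "gwalk G v b t'"
  shows "gstep G v a b"
  unfolding gstep_def
proof (intro conjI)
  show "\<exists>u l r w. brel G l r \<and> (a = u @ l @ w \<and> b = u @ r @ w \<or> a = u @ r @ w \<and> b = u @ l @ w)"
    using assms(1-3) by (intro exI[of _ u] exI[of _ l] exI[of _ r] exI[of _ w]) simp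
  show "\<exists>t. gwalk G v a t" using assms(4) by (rule exI)
  show "\<exists>t. gwalk G v b t" using assms(5) by (rule exI)
qed

lemma gstep_ctx:
  assumes G: "is_gog G" and br: "brel G l r" and W: "gwalk G v (u @ l @ w) t"
  shows "gstep G v (u @ l @ w) (u @ r @ w)" "gwalk G v (u @ r @ w) t"
proof -
  obtain m k where 1: "gwalk G v u m" "gwalk G m l k" "gwalk G k w t"
    using W unfolding walk3[OF G] by blast
  have "gwalk G m r k" using brel_walk[OF G br 1(2)] .
  then show 2: "gwalk G v (u @ r @ w) t" unfolding walk3[OF G] using 1 by blast
  show "gstep G v (u @ l @ w) (u @ r @ w)" by (rule gstepI[OF br refl refl W 2])
qed

lemma brel1: "v \<in> Vx G \<Longrightarrow> g \<in> carrier (grp G v) \<Longrightarrow> h \<in> carrier (grp G v) \<Longrightarrow>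
    brel G [Elt v g, Elt v h] [Elt v (g \<otimes>\<^bsub>grp G v\<^esub> h)]"
  unfolding brel_def by (rule disjI1) simp
lemma brel2: "v \<in> Vx G \<Longrightarrow> brel G [Elt v \<one>\<^bsub>grp G v\<^esub>] []"
  unfolding brel_def by (intro disjI2 disjI1) simp
lemma brel3: "v \<in> Vx G \<Longrightarrow> brel G [Gen v] []"
  unfolding brel_def by (intro disjI2 disjI1) simp
lemma brel4: "x \<in> gcar G \<Longrightarrow> brel G [Gen x, Gen (ebar G x)] []"
  unfolding brel_def by (intro disjI2 disjI1) simp
lemma brel5: "x \<in> gcar G \<Longrightarrow> g \<in> carrier (grp G x) \<Longrightarrow>
    brel G [Elt (edn G x) (hdn G x g), Gen x] [Gen x, Elt (eup G x) (hdn G (ebar G x) (hbar G x g))]"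
  unfolding brel_def apply (intro disjI2) apply (rule bexI[of _ x]) apply (rule bexI[of _ g]) by simp_all




context gbs_ctx
begin

lemma yeq_R1:
  assumes z: "z \<in> Vb B" and W: "gwalk Y dag qw (lam B z)" and s: "gstep Y dag qw qw'" and b: "b \<in> bset B z"
  shows "yeq Y B dag (z, qw, b) (z, qw', b)"
proof -
  have W': "gwalk Y dag qw' (lam B z)" using gstep_walk[OF Y s] W by simp
  have "ystep Y B dag (z, qw, b) (z, qw', b)" unfolding ystep_def using z W W' s b by auto
  then show ?thesis by (rule ystep_yeq)
qed

lemma yeq_R1s:
  assumes z: "z \<in> Vb B" and W: "gwalk Y dag qw (lam B z)" and s: "(gstep Y dag)\<^sup>*\<^sup>* qw qw'" and b: "b \<in> bset B z"
  shows "yeq Y B dag (z, qw, b) (z, qw', b)"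
  using s
proof (induction rule: rtranclp_induct)
  case base then show ?case by (rule yeq_refl)
next
  case (step q1 q2)
  have "gwalk Y dag q1 (lam B z)" using gequiv_walk[OF Y step(1)] W by simp
  then show ?case using step(3) yeq_R1[OF z _ step(2) b] yeq_trans by metis
qed

lemma yeq_R2:
  assumes z: "z \<in> Vb B" and W: "gwalk Y dag qw (lam B z)" and h: "h \<in> carrier (grp Y (lam B z))" and b: "b \<in> bset B z"
  shows "yeq Y B dag (z, qw @ [Elt (lam B z) h], b) (z, qw, lact B z h b)"
proof -
  have zc: "z \<in> bcar B" using z by (simp add: Vb_iff)
  have lv: "lam B z \<in> Vx Y" using Vb_lam[OF z] .
  have W': "gwalk Y dag (qw @ [Elt (lam B z) h]) (lam B z)" using walk_app[OF Y W] lv h by simp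
  have "lact B z h b \<in> bset B z" using lact_closed[OF zc h b] .
  then have "ystep Y B dag (z, qw @ [Elt (lam B z) h], b) (z, qw, lact B z h b)"
    unfolding ystep_def using z W W' h b by auto
  then show ?thesis by (rule ystep_yeq)
qed

lemma ystep_props:
  assumes "ystep Y B dag \<sigma> \<tau>"
  shows "fst \<sigma> = fst \<tau> \<and> vst Y B dag (rho B (fst \<sigma>)) \<sigma> \<and> vst Y B dag (rho B (fst \<sigma>)) \<tau>"
  using assms unfolding ystep_def by auto

lemma yeq_props:
  assumes "yeq Y B dag \<sigma> \<tau>" "vst Y B dag x \<sigma>"
  shows "fst \<sigma> = fst \<tau> \<and> vst Y B dag x \<tau>"
  using assms(1) unfolding yeq_def
proof (induction rule: rtranclp_induct)
  case base then show ?case using assms(2) by simp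
next
  case (step b c)
  show ?case using step(2) step(3) ystep_props[of dag b c] ystep_props[of dag c b] by (metis vst.elims(2) vst.simps)
qed

lemma fstep_val:
  assumes st: "fstep Y B v e s t" and e: "e \<in> bcar B" and ev: "bdn B e = v"
  shows "fst s \<in> carrier (grp Y (lam B v)) \<and> fst t \<in> carrier (grp Y (lam B v)) \<and>
    snd s \<in> bset B e \<and> snd t \<in> bset B e \<and>
    lact B v (fst s) (cdn B e (snd s)) = lact B v (fst t) (cdn B e (snd t))"
proof -
  obtain h where h: "h \<in> carrier (grp Y (lam B e))"
    and s1: "fst s = fst t \<otimes>\<^bsub>grp Y (lam B v)\<^esub> hdn Y (lam B e) h"
    and t2: "snd t = lact B e h (snd s)"
    and c: "fst s \<in> carrier (grp Y (lam B v))" "fst t \<in> carrier (grp Y (lam B v))"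
       "snd s \<in> bset B e" "snd t \<in> bset B e"
    using st unfolding fstep_def by blast
  have lv: "lam B v = edn Y (lam B e)" using lam_mor(2)[OF e] ev by simp
  have vc: "v \<in> bcar B" using bgraph(2)[OF e] ev by simp
  have hh: "hdn Y (lam B e) h \<in> carrier (grp Y (lam B v))"
    using hom_in[OF gog_grp(2)[OF Y lam_mor(1)[OF e]] h] lv by simp
  have cs: "cdn B e (snd s) \<in> bset B v" using cmaps(1)[OF e c(3)] ev by simp
  have "lact B v (fst t) (cdn B e (snd t)) = lact B v (fst t) (lact B v (hdn Y (lam B e) h) (cdn B e (snd s)))"
    using t2 cmaps_lact(1)[OF e c(3) h] ev by simp
  also have "\<dots> = lact B v (fst s) (cdn B e (snd s))"
    using lact_mult[OF vc c(2) hh cs] s1 by simp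
  finally show ?thesis using c by simp
qed

lemma fcls_mem: "t \<in> fcls Y B v e s \<longleftrightarrow> (\<lambda>a b. fstep Y B v e a b \<or> fstep Y B v e b a)\<^sup>*\<^sup>* s t"
  by (simp add: fcls_def)

lemma fcls_self: "s \<in> fcls Y B v e s"
  by (simp add: fcls_def)

lemma fcls_val:
  assumes t: "t \<in> fcls Y B v e s" and e: "e \<in> bcar B" and ev: "bdn B e = v"
    and s: "fst s \<in> carrier (grp Y (lam B v))" "snd s \<in> bset B e"
  shows "fst t \<in> carrier (grp Y (lam B v)) \<and> snd t \<in> bset B e \<and>
    lact B v (fst t) (cdn B e (snd t)) = lact B v (fst s) (cdn B e (snd s))"
  using t unfolding fcls_mem
proof (induction rule: rtranclp_induct)
  case base then show ?case using s by simp
next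
  case (step b c)
  from step(2) show ?case
  proof
    assume "fstep Y B v e b c" then show ?thesis using fstep_val[OF _ e ev] step(3) by metis
  next
    assume "fstep Y B v e c b" then show ?thesis using fstep_val[OF _ e ev] step(3) by metis
  qed
qed

lemma fmap_cls:
  assumes e: "e \<in> bcar B" and ev: "bdn B e = v" and g: "g \<in> carrier (grp Y (lam B v))" and b: "b \<in> bset B e"
  shows "fmap B v (e, fcls Y B v e (g, b)) = lact B v g (cdn B e b)"
proof -
  define t where "t = (SOME t. t \<in> fcls Y B v e (g, b))"
  have "t \<in> fcls Y B v e (g, b)" unfolding t_def using fcls_self by (rule someI)
  then have "lact B v (fst t) (cdn B e (snd t)) = lact B v g (cdn B e b)"
    using fcls_val[OF _ e ev] g b by fastforce
  moreover have "fmap B v (e, fcls Y B v e (g, b)) = lact B v (fst t) (cdn B e (snd t))"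
    unfolding fmap_def t_def by (simp add: case_prod_beta)
  ultimately show ?thesis by simp
qed

lemma fdom_iff: "ec \<in> fdom Y B v f \<longleftrightarrow> (\<exists>e g b. ec = (e, fcls Y B v e (g, b)) \<and> e \<in> bcar B \<and>
    rho B e = f \<and> bdn B e = v \<and> g \<in> carrier (grp Y (lam B v)) \<and> b \<in> bset B e)"
  by (simp add: fdom_def)

lemma dec_spec:
  assumes v: "v \<in> Vb B" and f: "f \<in> Ex_of X" and fv: "edn X f = rho B v" and b: "b \<in> bset B v"
  shows "dec Y B v f b \<in> fdom Y B v f \<and> fmap B v (dec Y B v f b) = b"
proof -
  have bij: "bij_betw (fmap B v) (fdom Y B v f) (bset B v)" using bij_fib[OF v f fv] .
  then have "b \<in> fmap B v ` fdom Y B v f" using b by (simp add: bij_betw_def)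
  then show ?thesis unfolding dec_def by (simp add: inv_into_into f_inv_into_f)
qed

lemma dec_eq:
  assumes v: "v \<in> Vb B" and f: "f \<in> Ex_of X" and fv: "edn X f = rho B v"
    and ec: "ec \<in> fdom Y B v f" and b: "fmap B v ec = b"
  shows "dec Y B v f b = ec"
proof -
  have bij: "bij_betw (fmap B v) (fdom Y B v f) (bset B v)" using bij_fib[OF v f fv] .
  then have "inj_on (fmap B v) (fdom Y B v f)" by (simp add: bij_betw_def)
  then show ?thesis unfolding dec_def b[symmetric] using ec by (simp add: inv_into_f_f)
qed

end



context gbs_ctx
begin

lemma RI1:
  assumes e: "e \<in> bcar B" and ev: "bdn B e = z" and W: "gwalk Y dag qw (lam B z)"
    and st: "fstep Y B z e a c"
  shows "yeq Y B dag (out B z qw e a) (out B z qw e c)"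
proof -
  obtain h where h: "h \<in> carrier (grp Y (lam B e))"
    and a1: "fst a = fst c \<otimes>\<^bsub>grp Y (lam B z)\<^esub> hdn Y (lam B e) h"
    and c2: "snd c = lact B e h (snd a)"
    and cc: "fst a \<in> carrier (grp Y (lam B z))" "fst c \<in> carrier (grp Y (lam B z))"
       "snd a \<in> bset B e" "snd c \<in> bset B e"
    using st unfolding fstep_def by blast
  define x where "x = lam B e"
  have xg: "x \<in> gcar Y" using lam_mor(1)[OF e] x_def by simp
  have lz: "edn Y x = lam B z" using lam_mor(2)[OF e] ev x_def by simp
  have zV: "z \<in> Vb B" using bdn_Vb[OF e] ev by simp
  have lzV: "lam B z \<in> Vx Y" using Vb_lam[OF zV] .
  have hx: "h \<in> carrier (grp Y x)" using h x_def by simp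
  have h1: "hdn Y x h \<in> carrier (grp Y (lam B z))"
    using hom_in[OF gog_grp(2)[OF Y xg] hx] lz by simp
  define h2 where "h2 = hdn Y (ebar Y x) (hbar Y x h)"
  have hb: "hbar Y x h \<in> carrier (grp Y (ebar Y x))" using hom_in[OF gog_grp(3)[OF Y xg] hx] .
  have h2c: "h2 \<in> carrier (grp Y (eup Y x))"
    using hom_in[OF gog_grp(2)[OF Y gog_graph(1)[OF Y xg]] hb] unfolding h2_def eup_def .
  have ux: "lam B (bup B e) = eup Y x" using lam_bup[OF e] x_def by simp
  have upV: "bup B e \<in> Vb B" using bup_Vb[OF e] .
  have exV: "eup Y x \<in> Vx Y" using eup_Vx[OF Y xg] .
  define gc where "gc = fst c"
  have gcc: "gc \<in> carrier (grp Y (lam B z))" using cc(2) gc_def by simp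
  have grpz: "group (grp Y (lam B z))" using gog_grp(1)[OF Y] lzV by (simp add: Vx_iff)
  have prodc: "gc \<otimes>\<^bsub>grp Y (lam B z)\<^esub> hdn Y x h \<in> carrier (grp Y (lam B z))"
    using grpz gcc h1 by (simp add: group.is_monoid monoid.m_closed)
  have W1: "gwalk Y dag (qw @ [Elt (lam B z) gc, Elt (lam B z) (hdn Y x h)] @ [Gen x]) (eup Y x)"
    using walk_app[OF Y W] lzV gcc h1 xg lz exV by simp
  have S1: "gstep Y dag (qw @ [Elt (lam B z) gc, Elt (lam B z) (hdn Y x h)] @ [Gen x])
      (qw @ [Elt (lam B z) (gc \<otimes>\<^bsub>grp Y (lam B z)\<^esub> hdn Y x h)] @ [Gen x])"
    using gstep_ctx(1)[OF Y brel1[OF lzV gcc h1] W1] .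
  have W1': "gwalk Y dag ((qw @ [Elt (lam B z) gc]) @ [Elt (edn Y x) (hdn Y x h), Gen x] @ []) (eup Y x)"
    using W1 lz by simp
  have S2: "gstep Y dag ((qw @ [Elt (lam B z) gc]) @ [Elt (edn Y x) (hdn Y x h), Gen x] @ [])
      ((qw @ [Elt (lam B z) gc]) @ [Gen x, Elt (eup Y x) h2] @ [])"
    using gstep_ctx(1)[OF Y brel5[OF xg hx] W1'] unfolding h2_def .
  have ca: "cup B e (snd a) \<in> bset B (bup B e)" using cup_bset[OF e cc(3)] .
  have W3: "gwalk Y dag (qw @ [Elt (lam B z) gc, Gen x]) (lam B (bup B e))"
    using walk_app[OF Y W] lzV gcc xg lz exV ux by simp
  have "yeq Y B dag (bup B e, qw @ [Elt (lam B z) gc, Elt (lam B z) (hdn Y x h)] @ [Gen x], cup B e (snd a))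
     (bup B e, qw @ [Elt (lam B z) (gc \<otimes>\<^bsub>grp Y (lam B z)\<^esub> hdn Y x h)] @ [Gen x], cup B e (snd a))"
    using yeq_R1[OF upV _ S1 ca] W1 ux by simp
  then have Y1': "yeq Y B dag
      (bup B e, qw @ [Elt (lam B z) (gc \<otimes>\<^bsub>grp Y (lam B z)\<^esub> hdn Y x h)] @ [Gen x], cup B e (snd a))
      (bup B e, qw @ [Elt (lam B z) gc, Elt (lam B z) (hdn Y x h)] @ [Gen x], cup B e (snd a))"
    by (rule yeq_sym)
  have oa: "out B z qw e a = (bup B e, qw @ [Elt (lam B z) (gc \<otimes>\<^bsub>grp Y (lam B z)\<^esub> hdn Y x h)] @ [Gen x], cup B e (snd a))"
    unfolding out_def a1 gc_def x_def by simp
  have Y1: "yeq Y B dag (out B z qw e a)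
      (bup B e, qw @ [Elt (lam B z) gc, Elt (lam B z) (hdn Y x h)] @ [Gen x], cup B e (snd a))"
    unfolding oa by (rule Y1')
  have "yeq Y B dag (bup B e, (qw @ [Elt (lam B z) gc]) @ [Elt (edn Y x) (hdn Y x h), Gen x] @ [], cup B e (snd a))
     (bup B e, (qw @ [Elt (lam B z) gc]) @ [Gen x, Elt (eup Y x) h2] @ [], cup B e (snd a))"
    using yeq_R1[OF upV _ S2 ca] W1' ux by simp
  then have Y2: "yeq Y B dag (bup B e, qw @ [Elt (lam B z) gc, Elt (lam B z) (hdn Y x h)] @ [Gen x], cup B e (snd a))
     (bup B e, (qw @ [Elt (lam B z) gc, Gen x]) @ [Elt (lam B (bup B e)) h2], cup B e (snd a))"
    using lz ux by simp
  have h2u: "h2 \<in> carrier (grp Y (lam B (bup B e)))" using h2c ux by simp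
  have Y3: "yeq Y B dag (bup B e, (qw @ [Elt (lam B z) gc, Gen x]) @ [Elt (lam B (bup B e)) h2], cup B e (snd a))
     (bup B e, qw @ [Elt (lam B z) gc, Gen x], lact B (bup B e) h2 (cup B e (snd a)))"
    using yeq_R2[OF upV W3 h2u ca] .
  have eb: "bbar B e \<in> bcar B" using bgraph(1)[OF e] .
  have lbe: "lam B (bbar B e) = ebar Y x" using lam_mor(3)[OF e] x_def by simp
  have hbe: "hbar Y (lam B e) h \<in> carrier (grp Y (lam B (bbar B e)))" using hb lbe x_def by simp
  have cba: "cbar B e (snd a) \<in> bset B (bbar B e)" using cmaps(2)[OF e cc(3)] .
  have "cup B e (snd c) = cdn B (bbar B e) (lact B (bbar B e) (hbar Y (lam B e) h) (cbar B e (snd a)))"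
    unfolding cup_def c2 using cmaps_lact(2)[OF e cc(3) h] by simp
  also have "\<dots> = lact B (bdn B (bbar B e)) (hdn Y (lam B (bbar B e)) (hbar Y (lam B e) h)) (cdn B (bbar B e) (cbar B e (snd a)))"
    using cmaps_lact(1)[OF eb cba hbe] .
  also have "\<dots> = lact B (bup B e) h2 (cup B e (snd a))"
    unfolding h2_def cup_def bup_def using lbe x_def by simp
  finally have cupc: "cup B e (snd c) = lact B (bup B e) h2 (cup B e (snd a))" .
  have "out B z qw e c = (bup B e, qw @ [Elt (lam B z) gc, Gen x], lact B (bup B e) h2 (cup B e (snd a)))"
    unfolding out_def gc_def x_def cupc by simp
  then show ?thesis using yeq_trans[OF Y1 yeq_trans[OF Y2 Y3]] by simp
qed

lemma RI:
  assumes e: "e \<in> bcar B" and ev: "bdn B e = z" and W: "gwalk Y dag qw (lam B z)"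
    and t: "t \<in> fcls Y B z e s"
  shows "yeq Y B dag (out B z qw e s) (out B z qw e t)"
  using t unfolding fcls_mem
proof (induction rule: rtranclp_induct)
  case base then show ?case by (rule yeq_refl)
next
  case (step b c)
  have "yeq Y B dag (out B z qw e b) (out B z qw e c)"
  proof (cases "fstep Y B z e b c")
    case True then show ?thesis by (rule RI1[OF e ev W])
  next
    case False then have "fstep Y B z e c b" using step(2) by blast
    then show ?thesis by (rule yeq_sym[OF RI1[OF e ev W]])
  qed
  then show ?case by (rule yeq_trans[OF step(3)])
qed

lemma DL:
  assumes zV: "z \<in> Vb B" and f: "f \<in> gcar X" and fV: "f \<notin> Vx X" and fz: "edn X f = rho B z"
    and e: "e \<in> bcar B" and ef: "rho B e = f" and ez: "bdn B e = z"
    and g: "g \<in> carrier (grp Y (lam B z))" and be: "be \<in> bset B e"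
    and W: "gwalk Y dag qw (lam B z)"
  shows "yeq Y B dag (lift1 X Y B (Gen f) (z, qw, lact B z g (cdn B e be))) (out B z qw e (g, be))"
proof -
  define ec where "ec = (e, fcls Y B z e (g, be))"
  have ecd: "ec \<in> fdom Y B z f" unfolding fdom_iff ec_def
    using e ef ez g be by (intro exI[of _ e] exI[of _ g] exI[of _ be]) simp
  have fm: "fmap B z ec = lact B z g (cdn B e be)" unfolding ec_def using fmap_cls[OF e ez g be] .
  have fE: "f \<in> Ex_of X" using f fV by (simp add: Ex_of_iff)
  have d: "dec Y B z f (lact B z g (cdn B e be)) = ec" using dec_eq[OF zV fE fz ecd fm] .
  define t where "t = (SOME t. t \<in> fcls Y B z e (g, be))"
  have t: "t \<in> fcls Y B z e (g, be)" unfolding t_def using fcls_self by (rule someI)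
  have "lift1 X Y B (Gen f) (z, qw, lact B z g (cdn B e be)) = out B z qw e t"
    using fV d unfolding t_def ec_def by simp
  then show ?thesis using yeq_sym[OF RI[OF e ez W t]] by simp
qed

lemma BL:
  assumes E: "E \<in> bcar B" "E \<notin> Vb B" and c: "c \<in> bset B E" and W: "gwalk Y dag qw (lam B (bdn B E))"
  shows "yeq Y B dag (lift1 X Y B (Gen (rho B E)) (bdn B E, qw, cdn B E c))
     (bup B E, qw @ [Elt (lam B (bdn B E)) \<one>\<^bsub>grp Y (lam B (bdn B E))\<^esub>, Gen (lam B E)], cup B E c)"
proof -
  have zV: "bdn B E \<in> Vb B" using bdn_Vb[OF E(1)] .
  have zc: "bdn B E \<in> bcar B" using zV by (simp add: Vb_iff)
  have grpz: "group (grp Y (lam B (bdn B E)))" using gog_grp(1)[OF Y] Vb_lam[OF zV] by (simp add: Vx_iff)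
  have one: "\<one>\<^bsub>grp Y (lam B (bdn B E))\<^esub> \<in> carrier (grp Y (lam B (bdn B E)))"
    using grpz by (simp add: group.is_monoid monoid.one_closed)
  have cd: "cdn B E c \<in> bset B (bdn B E)" using cmaps(1)[OF E(1) c] .
  have "lact B (bdn B E) \<one>\<^bsub>grp Y (lam B (bdn B E))\<^esub> (cdn B E c) = cdn B E c" using lact_one[OF zc cd] .
  moreover have "yeq Y B dag (lift1 X Y B (Gen (rho B E)) (bdn B E, qw, lact B (bdn B E) \<one>\<^bsub>grp Y (lam B (bdn B E))\<^esub> (cdn B E c)))
     (out B (bdn B E) qw E (\<one>\<^bsub>grp Y (lam B (bdn B E))\<^esub>, c))"
    using DL[OF zV rho_mor(1)[OF E(1)] simplicial[OF E] rho_mor(2)[OF E(1), symmetric] E(1) refl refl one c W] .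
  ultimately show ?thesis unfolding out_def by simp
qed

lemma CANCEL:
  assumes e: "e \<in> bcar B" "e \<notin> Vb B" and be: "be \<in> bset B e" and W: "gwalk Y dag qw (lam B (bdn B e))"
  shows "yeq Y B dag (lift1 X Y B (Gen (rho B (bbar B e))) (bup B e, qw @ [Gen (lam B e)], cup B e be))
     (bdn B e, qw, cdn B e be)"
proof -
  have E: "bbar B e \<in> bcar B" "bbar B e \<notin> Vb B" using edge_bbar[OF e] by auto
  have c: "cbar B e be \<in> bset B (bbar B e)" using cmaps(2)[OF e(1) be] .
  define x where "x = lam B e"
  have xg: "x \<in> gcar Y" using lam_mor(1)[OF e(1)] x_def by simp
  have lz: "edn Y x = lam B (bdn B e)" using lam_mor(2)[OF e(1)] x_def by simp
  have dE: "bdn B (bbar B e) = bup B e" by (simp add: bup_def)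
  have lE: "lam B (bbar B e) = ebar Y x" using lam_mor(3)[OF e(1)] x_def by simp
  have lu: "lam B (bup B e) = eup Y x" using lam_bup[OF e(1)] x_def by simp
  have uE: "bup B (bbar B e) = bdn B e" using bup_bbar[OF e(1)] .
  have cE: "cdn B (bbar B e) (cbar B e be) = cup B e be" by (simp add: cup_def)
  have cE2: "cup B (bbar B e) (cbar B e be) = cdn B e be"
    unfolding cup_def using bgraph(3)[OF e(1)] cmaps(3)[OF e(1) be] by simp
  have exV: "eup Y x \<in> Vx Y" using eup_Vx[OF Y xg] .
  have W0: "gwalk Y dag (qw @ [Gen x]) (eup Y x)" using walk_app[OF Y W] xg lz exV by simp
  have Y1: "yeq Y B dag (lift1 X Y B (Gen (rho B (bbar B e))) (bup B e, qw @ [Gen x], cup B e be))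
     (bdn B e, (qw @ [Gen x]) @ [Elt (eup Y x) \<one>\<^bsub>grp Y (eup Y x)\<^esub>, Gen (ebar Y x)], cdn B e be)"
    using BL[OF E c, of dag "qw @ [Gen x]"] W0 dE lE lu uE cE cE2 by simp
  have dV: "bdn B e \<in> Vb B" using bdn_Vb[OF e(1)] .
  have cd: "cdn B e be \<in> bset B (bdn B e)" using cmaps(1)[OF e(1) be] .
  have xe: "ebar Y x \<in> gcar Y" using gog_graph(1)[OF Y xg] .
  have eex: "eup Y (ebar Y x) = lam B (bdn B e)" using eup_ebar[OF Y xg] lz by simp
  have grpu: "group (grp Y (eup Y x))" using gog_grp(1)[OF Y] exV by (simp add: Vx_iff)
  have one: "\<one>\<^bsub>grp Y (eup Y x)\<^esub> \<in> carrier (grp Y (eup Y x))"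
    using grpu by (simp add: group.is_monoid monoid.one_closed)
  have Wa: "gwalk Y dag ((qw @ [Gen x]) @ [Elt (eup Y x) \<one>\<^bsub>grp Y (eup Y x)\<^esub>] @ [Gen (ebar Y x)]) (lam B (bdn B e))"
    using walk_app[OF Y W] xg lz exV one xe eex Vb_lam[OF bdn_Vb[OF e(1)]] by (simp add: eup_def)
  have S1: "gstep Y dag ((qw @ [Gen x]) @ [Elt (eup Y x) \<one>\<^bsub>grp Y (eup Y x)\<^esub>] @ [Gen (ebar Y x)])
     ((qw @ [Gen x]) @ [] @ [Gen (ebar Y x)])"
    using gstep_ctx(1)[OF Y brel2[OF exV] Wa] .
  have Y2: "yeq Y B dag (bdn B e, (qw @ [Gen x]) @ [Elt (eup Y x) \<one>\<^bsub>grp Y (eup Y x)\<^esub>, Gen (ebar Y x)], cdn B e be)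
     (bdn B e, qw @ [Gen x, Gen (ebar Y x)], cdn B e be)"
    using yeq_R1[OF dV _ S1 cd] Wa by simp
  have Wb: "gwalk Y dag (qw @ [Gen x, Gen (ebar Y x)] @ []) (lam B (bdn B e))"
    using gstep_ctx(2)[OF Y brel2[OF exV] Wa] by simp
  have S2: "gstep Y dag (qw @ [Gen x, Gen (ebar Y x)] @ []) (qw @ [] @ [])"
    using gstep_ctx(1)[OF Y brel4[OF xg] Wb] .
  have Y3: "yeq Y B dag (bdn B e, qw @ [Gen x, Gen (ebar Y x)], cdn B e be) (bdn B e, qw, cdn B e be)"
    using yeq_R1[OF dV _ S2 cd] Wb by simp
  show ?thesis using yeq_trans[OF Y1 yeq_trans[OF Y2 Y3]] x_def by simp
qed

end



lemma walk_Cons_split: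
  assumes G: "is_gog G" and "gwalk G x (l # a) t"
  shows "\<exists>x'. gwalk G x [l] x' \<and> gwalk G x' a t"
  using assms(2) gwalk_append[OF G, of x "[l]" a t] by simp

lemma walk_Elt: "gwalk G x [Elt u g] x' \<longleftrightarrow> u \<in> Vx G \<and> u = x \<and> g \<in> carrier (grp G u) \<and> x' = x"
  by auto

lemma walk_Gen: "gwalk G x [Gen f] x' \<longleftrightarrow> f \<in> gcar G \<and> edn G f = x \<and> eup G f \<in> Vx G \<and> x' = eup G f"
  by auto

context gbs_ctx
begin

lemma yeq_fst: "yeq Y B dag \<sigma> \<tau> \<Longrightarrow> fst \<sigma> = fst \<tau>"
  unfolding yeq_def
proof (induction rule: rtranclp_induct)
  case (step b c) then show ?case using ystep_props[of dag b c] ystep_props[of dag c b] by metis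
qed simp

lemma yeq_vst: "yeq Y B dag \<sigma> \<tau> \<Longrightarrow> vst Y B dag x \<sigma> \<Longrightarrow> vst Y B dag x \<tau>"
  using yeq_props by blast

lemma out_vst:
  assumes e: "e \<in> bcar B" and ez: "bdn B e = z" and zV: "z \<in> Vb B"
    and g: "g \<in> carrier (grp Y (lam B z))" and be: "be \<in> bset B e" and W: "gwalk Y dag qw (lam B z)"
  shows "vst Y B dag (eup X (rho B e)) (out B z qw e (g, be))"
proof -
  have lz: "edn Y (lam B e) = lam B z" using lam_mor(2)[OF e] ez by simp
  have "gwalk Y dag (qw @ [Elt (lam B z) g, Gen (lam B e)]) (lam B (bup B e))"
    using walk_app[OF Y W] Vb_lam[OF zV] g lam_mor(1)[OF e] lz eup_Vx[OF Y lam_mor(1)[OF e]] lam_bup[OF e] by simp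
  then show ?thesis unfolding out_def
    using bup_Vb[OF e] rho_bup[OF e] cup_bset[OF e be] by simp
qed

lemma gen_dec:
  assumes v: "vst Y B dag x (z, qw, b)" and f: "f \<in> gcar X" "f \<notin> Vx X" and fx: "edn X f = x"
  obtains e g be where "e \<in> bcar B" "e \<notin> Vb B" "rho B e = f" "bdn B e = z"
    "g \<in> carrier (grp Y (lam B z))" "be \<in> bset B e" "b = lact B z g (cdn B e be)"
proof -
  have zV: "z \<in> Vb B" and rz: "rho B z = x" and b: "b \<in> bset B z" using v by auto
  have fE: "f \<in> Ex_of X" using f by (simp add: Ex_of_iff)
  have d: "dec Y B z f b \<in> fdom Y B z f" "fmap B z (dec Y B z f b) = b"
    using dec_spec[OF zV fE _ b] fx rz by auto
  obtain e g be where E: "dec Y B z f b = (e, fcls Y B z e (g, be))" "e \<in> bcar B"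
    "rho B e = f" "bdn B e = z" "g \<in> carrier (grp Y (lam B z))" "be \<in> bset B e"
    using d(1) unfolding fdom_iff by blast
  have "b = lact B z g (cdn B e be)" using d(2) E(1) fmap_cls[OF E(2,4,5,6)] by simp
  moreover have "e \<notin> Vb B" using Vb_rho[of e] E(3) f(2) by auto
  ultimately show ?thesis using that E by blast
qed

lemma lift1_gen_edge:
  assumes v: "vst Y B dag x (z, qw, b)" and f: "f \<in> gcar X" "f \<notin> Vx X" and fx: "edn X f = x"
  obtains e g be where "e \<in> bcar B" "e \<notin> Vb B" "rho B e = f" "bdn B e = z"
    "g \<in> carrier (grp Y (lam B z))" "be \<in> bset B e" "b = lact B z g (cdn B e be)"
    "yeq Y B dag (lift1 X Y B (Gen f) (z, qw, b)) (out B z qw e (g, be))"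
proof -
  obtain e g be where E: "e \<in> bcar B" "e \<notin> Vb B" "rho B e = f" "bdn B e = z"
    "g \<in> carrier (grp Y (lam B z))" "be \<in> bset B e" "b = lact B z g (cdn B e be)"
    using gen_dec[OF v f fx] by blast
  have zV: "z \<in> Vb B" and rz: "rho B z = x" and W: "gwalk Y dag qw (lam B z)" using v by auto
  have "yeq Y B dag (lift1 X Y B (Gen f) (z, qw, b)) (out B z qw e (g, be))"
    using DL[OF zV f(1) f(2) _ E(1) E(3) E(4) E(5) E(6) W] fx rz E(7) by simp
  then show ?thesis using that E by blast
qed

lemma lift1_vst:
  assumes v: "vst Y B dag x \<sigma>" and w: "gwalk X x [l] x'"
  shows "vst Y B dag x' (lift1 X Y B l \<sigma>)"
proof -
  obtain z qw b where s: "\<sigma> = (z, qw, b)" by (cases \<sigma>) auto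
  have zV: "z \<in> Vb B" and rz: "rho B z = x" and W: "gwalk Y dag qw (lam B z)" and b: "b \<in> bset B z"
    using v s by auto
  have zc: "z \<in> bcar B" using zV by (simp add: Vb_iff)
  show ?thesis
  proof (cases l)
    case (Elt u g)
    then have "u = x" "g \<in> carrier (grp X x)" "x' = x" using w by auto
    then show ?thesis using s Elt zV rz W ract_closed[OF zc _ b, of g] by simp
  next
    case (Gen f)
    then have f: "f \<in> gcar X" "edn X f = x" "x' = eup X f" using w by auto
    show ?thesis
    proof (cases "f \<in> Vx X")
      case True
      then have "x' = x" using f Vx_eup[OF X True] by (simp add: Vx_iff)
      then show ?thesis using s Gen True v by simp
    next
      case False
      obtain e g be where E: "e \<in> bcar B" "e \<notin> Vb B" "rho B e = f" "bdn B e = z"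
        "g \<in> carrier (grp Y (lam B z))" "be \<in> bset B e"
        and Yq: "yeq Y B dag (lift1 X Y B (Gen f) (z, qw, b)) (out B z qw e (g, be))"
        using lift1_gen_edge[OF v[unfolded s] f(1) False f(2)] by blast
      have "vst Y B dag x' (out B z qw e (g, be))" using out_vst[OF E(1) E(4) zV E(5) E(6) W] E(3) f(3) by simp
      then show ?thesis using yeq_vst[OF yeq_sym[OF Yq]] s Gen by simp
    qed
  qed
qed

lemma lift_vst:
  assumes "vst Y B dag x \<sigma>" "gwalk X x a t"
  shows "vst Y B dag t (lift X Y B a \<sigma>)"
  using assms
proof (induction a arbitrary: \<sigma> x)
  case Nil then show ?case by simp
next
  case (Cons l a)
  obtain x' where w: "gwalk X x [l] x'" "gwalk X x' a t" using walk_Cons_split[OF X Cons(3)] by blast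
  have "vst Y B dag x' (lift1 X Y B l \<sigma>)" by (rule lift1_vst[OF Cons(2) w(1)])
  then show ?case using Cons(1)[OF _ w(2)] by simp
qed

end



context gbs_ctx
begin

lemma L2:
  assumes st: "ystep Y B dag \<sigma> \<tau>" and w: "gwalk X (rho B (fst \<sigma>)) [l] x'"
  shows "yeq Y B dag (lift1 X Y B l \<sigma>) (lift1 X Y B l \<tau>)"
proof -
  obtain z qw b qw' b' where s: "\<sigma> = (z, qw, b)" "\<tau> = (z, qw', b')" and zV: "z \<in> Vb B"
    and W: "gwalk Y dag qw (lam B z)" and W': "gwalk Y dag qw' (lam B z)"
    and b: "b \<in> bset B z" and b': "b' \<in> bset B z"
    and R: "(gstep Y dag qw qw' \<and> b = b') \<or>
      (\<exists>h\<in>carrier (grp Y (lam B z)). qw = qw' @ [Elt (lam B z) h] \<and> b' = lact B z h b)"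
    using st unfolding ystep_def by blast
  have zc: "z \<in> bcar B" using zV by (simp add: Vb_iff)
  define x where "x = rho B z"
  have v: "vst Y B dag x (z, qw, b)" using zV W b x_def by simp
  have v': "vst Y B dag x (z, qw', b')" using zV W' b' x_def by simp
  have wx: "gwalk X x [l] x'" using w s x_def by simp
  show ?thesis
  proof (cases l)
    case (Elt u g)
    then have g: "g \<in> carrier (grp X (rho B z))" using wx x_def by auto
    from R show ?thesis
    proof
      assume r: "gstep Y dag qw qw' \<and> b = b'"
      show ?thesis using yeq_R1[OF zV W conjunct1[OF r] ract_closed[OF zc g b]] r s Elt by simp
    next
      assume "\<exists>h\<in>carrier (grp Y (lam B z)). qw = qw' @ [Elt (lam B z) h] \<and> b' = lact B z h b"
      then obtain h where h: "h \<in> carrier (grp Y (lam B z))" "qw = qw' @ [Elt (lam B z) h]" "b' = lact B z h b"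
        by blast
      have "yeq Y B dag (z, qw' @ [Elt (lam B z) h], ract B z b g) (z, qw', lact B z h (ract B z b g))"
        using yeq_R2[OF zV W' h(1) ract_closed[OF zc g b]] .
      then show ?thesis using s Elt h lr_comm[OF zc h(1) g b] by simp
    qed
  next
    case (Gen f)
    then have f: "f \<in> gcar X" "edn X f = x" using wx by auto
    show ?thesis
    proof (cases "f \<in> Vx X")
      case True
      then show ?thesis using s Gen ystep_yeq[OF st] by simp
    next
      case False
      obtain e g be where E: "e \<in> bcar B" "e \<notin> Vb B" "rho B e = f" "bdn B e = z"
        "g \<in> carrier (grp Y (lam B z))" "be \<in> bset B e" "b = lact B z g (cdn B e be)"
        and Yq: "yeq Y B dag (lift1 X Y B (Gen f) (z, qw, b)) (out B z qw e (g, be))"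
        using lift1_gen_edge[OF v f(1) False f(2)] by blast
      have lz: "edn Y (lam B e) = lam B z" using lam_mor(2)[OF E(1)] E(4) by simp
      have lg: "lam B e \<in> gcar Y" using lam_mor(1)[OF E(1)] .
      have lzV: "lam B z \<in> Vx Y" using Vb_lam[OF zV] .
      have upV: "bup B e \<in> Vb B" using bup_Vb[OF E(1)] .
      have cb: "cup B e be \<in> bset B (bup B e)" using cup_bset[OF E(1) E(6)] .
      from R show ?thesis
      proof
        assume r: "gstep Y dag qw qw' \<and> b = b'"
        have Yq': "yeq Y B dag (lift1 X Y B (Gen f) (z, qw', b')) (out B z qw' e (g, be))"
          using DL[OF zV f(1) False _ E(1) E(3) E(4) E(5) E(6) W'] f(2) x_def E(7) r by simp
        have tail: "gwalk Y (lam B z) [Elt (lam B z) g, Gen (lam B e)] (lam B (bup B e))"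
          using lzV E(5) lg lz eup_Vx[OF Y lg] lam_bup[OF E(1)] by simp
        have "gstep Y dag (qw @ [Elt (lam B z) g, Gen (lam B e)]) (qw' @ [Elt (lam B z) g, Gen (lam B e)])"
          using gstep_app_right[OF Y conjunct1[OF r] W tail] .
        moreover have "gwalk Y dag (qw @ [Elt (lam B z) g, Gen (lam B e)]) (lam B (bup B e))"
          using walk_app[OF Y W] tail Vb_lam[OF upV] by simp
        ultimately have "yeq Y B dag (out B z qw e (g, be)) (out B z qw' e (g, be))"
          unfolding out_def using yeq_R1[OF upV _ _ cb] by simp
        then show ?thesis using yeq_trans[OF Yq yeq_trans[OF _ yeq_sym[OF Yq']]] s Gen by simp
      next
        assume "\<exists>h\<in>carrier (grp Y (lam B z)). qw = qw' @ [Elt (lam B z) h] \<and> b' = lact B z h b"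
        then obtain h where h: "h \<in> carrier (grp Y (lam B z))" "qw = qw' @ [Elt (lam B z) h]" "b' = lact B z h b"
          by blast
        have grpz: "group (grp Y (lam B z))" using gog_grp(1)[OF Y] lzV by (simp add: Vx_iff)
        have hg: "h \<otimes>\<^bsub>grp Y (lam B z)\<^esub> g \<in> carrier (grp Y (lam B z))"
          using grpz h(1) E(5) by (simp add: group.is_monoid monoid.m_closed)
        have cd: "cdn B e be \<in> bset B z" using cmaps(1)[OF E(1) E(6)] E(4) by simp
        have b'2: "b' = lact B z (h \<otimes>\<^bsub>grp Y (lam B z)\<^esub> g) (cdn B e be)"
          using h(3) E(7) lact_mult[OF zc h(1) E(5) cd] by simp
        have Yq': "yeq Y B dag (lift1 X Y B (Gen f) (z, qw', b')) (out B z qw' e (h \<otimes>\<^bsub>grp Y (lam B z)\<^esub> g, be))"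
          using DL[OF zV f(1) False _ E(1) E(3) E(4) hg E(6) W'] f(2) x_def b'2 by simp
        have Wa: "gwalk Y dag (qw' @ [Elt (lam B z) h, Elt (lam B z) g] @ [Gen (lam B e)]) (lam B (bup B e))"
          using walk_app[OF Y W'] lzV h(1) E(5) lg lz eup_Vx[OF Y lg] lam_bup[OF E(1)] by simp
        have S: "gstep Y dag (qw' @ [Elt (lam B z) h, Elt (lam B z) g] @ [Gen (lam B e)])
            (qw' @ [Elt (lam B z) (h \<otimes>\<^bsub>grp Y (lam B z)\<^esub> g)] @ [Gen (lam B e)])"
          using gstep_ctx(1)[OF Y brel1[OF lzV h(1) E(5)] Wa] .
        have "yeq Y B dag (out B z qw e (g, be)) (out B z qw' e (h \<otimes>\<^bsub>grp Y (lam B z)\<^esub> g, be))"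
          unfolding out_def using yeq_R1[OF upV Wa S cb] h(2) by simp
        then show ?thesis using yeq_trans[OF Yq yeq_trans[OF _ yeq_sym[OF Yq']]] s Gen by simp
      qed
    qed
  qed
qed

lemma L2y:
  assumes st: "yeq Y B dag \<sigma> \<tau>" and w: "gwalk X (rho B (fst \<sigma>)) [l] x'"
  shows "yeq Y B dag (lift1 X Y B l \<sigma>) (lift1 X Y B l \<tau>)"
  using st[unfolded yeq_def]
proof (induction rule: rtranclp_induct)
  case base then show ?case by (rule yeq_refl)
next
  case (step b c)
  have fb: "fst b = fst \<sigma>" using yeq_fst[of dag \<sigma> b] step(1) unfolding yeq_def by simp
  have "yeq Y B dag (lift1 X Y B l b) (lift1 X Y B l c)"
  proof (cases "ystep Y B dag b c")
    case True then show ?thesis using L2[OF True] w fb by simp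
  next
    case False
    then have st2: "ystep Y B dag c b" using step(2) by blast
    have "fst c = fst b" using ystep_props[OF st2] by simp
    then show ?thesis using yeq_sym[OF L2[OF st2]] w fb by simp
  qed
  then show ?case by (rule yeq_trans[OF step(3)])
qed

lemma L2w:
  assumes "yeq Y B dag \<sigma> \<tau>" "vst Y B dag x \<sigma>" "gwalk X x a t"
  shows "yeq Y B dag (lift X Y B a \<sigma>) (lift X Y B a \<tau>)"
  using assms
proof (induction a arbitrary: \<sigma> \<tau> x)
  case Nil then show ?case by simp
next
  case (Cons l a)
  obtain x' where w: "gwalk X x [l] x'" "gwalk X x' a t" using walk_Cons_split[OF X Cons(4)] by blast
  obtain z qw b where s: "\<sigma> = (z, qw, b)" by (cases \<sigma>) auto
  have rx: "rho B (fst \<sigma>) = x" using Cons(3) s by simp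
  have 1: "yeq Y B dag (lift1 X Y B l \<sigma>) (lift1 X Y B l \<tau>)" using L2y[OF Cons(2)] w(1) rx by simp
  have 2: "vst Y B dag x' (lift1 X Y B l \<sigma>)" by (rule lift1_vst[OF Cons(3) w(1)])
  show ?case using Cons(1)[OF 1 2 w(2)] by simp
qed

end



context gbs_ctx
begin

lemma L3_c4:
  assumes v: "vst Y B dag m \<sigma>" and x: "x \<in> gcar X" and mx: "edn X x = m"
  shows "yeq Y B dag (lift1 X Y B (Gen (ebar X x)) (lift1 X Y B (Gen x) \<sigma>)) \<sigma>"
proof -
  obtain z qw b where s: "\<sigma> = (z, qw, b)" by (cases \<sigma>) auto
  have zV: "z \<in> Vb B" and rz: "rho B z = m" and W: "gwalk Y dag qw (lam B z)" and b: "b \<in> bset B z"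
    using v s by auto
  show ?thesis
  proof (cases "x \<in> Vx X")
    case True
    then have "ebar X x = x" using Vx_ebar[OF X] by simp
    then show ?thesis using True s by (simp add: yeq_refl)
  next
    case False
    obtain e g be where E: "e \<in> bcar B" "e \<notin> Vb B" "rho B e = x" "bdn B e = z"
        "g \<in> carrier (grp Y (lam B z))" "be \<in> bset B e" "b = lact B z g (cdn B e be)"
        and Yq: "yeq Y B dag (lift1 X Y B (Gen x) (z, qw, b)) (out B z qw e (g, be))"
      using lift1_gen_edge[OF v[unfolded s] x False mx] by blast
    have fo: "fst (lift1 X Y B (Gen x) (z, qw, b)) = bup B e" using yeq_fst[OF Yq] by (simp add: out_def)
    have wx: "gwalk X (rho B (fst (lift1 X Y B (Gen x) (z, qw, b)))) [Gen (ebar X x)] (edn X x)"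
      using fo rho_bup[OF E(1)] E(3) gog_graph(1)[OF X x] eup_ebar[OF X x] edn_Vx[OF X x] by (simp add: eup_def)
    have Y1: "yeq Y B dag (lift1 X Y B (Gen (ebar X x)) (lift1 X Y B (Gen x) (z, qw, b)))
        (lift1 X Y B (Gen (ebar X x)) (out B z qw e (g, be)))"
      using L2y[OF Yq wx] .
    have lzV: "lam B z \<in> Vx Y" using Vb_lam[OF zV] .
    have W0: "gwalk Y dag (qw @ [Elt (lam B z) g]) (lam B (bdn B e))" using walk_app[OF Y W] lzV E(5) E(4) by simp
    have Y2: "yeq Y B dag (lift1 X Y B (Gen (rho B (bbar B e))) (bup B e, (qw @ [Elt (lam B z) g]) @ [Gen (lam B e)], cup B e be))
       (bdn B e, qw @ [Elt (lam B z) g], cdn B e be)"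
      using CANCEL[OF E(1) E(2) E(6) W0] .
    have Y2': "yeq Y B dag (lift1 X Y B (Gen (ebar X x)) (out B z qw e (g, be)))
       (z, qw @ [Elt (lam B z) g], cdn B e be)"
      using Y2 rho_mor(3)[OF E(1)] E(3) E(4) unfolding out_def by simp
    have cd: "cdn B e be \<in> bset B z" using cmaps(1)[OF E(1) E(6)] E(4) by simp
    have Y3: "yeq Y B dag (z, qw @ [Elt (lam B z) g], cdn B e be) (z, qw, b)"
      using yeq_R2[OF zV W E(5) cd] E(7) by simp
    show ?thesis using yeq_trans[OF Y1 yeq_trans[OF Y2' Y3]] s by simp
  qed
qed

lemma L3_c5:
  assumes v: "vst Y B dag m \<sigma>" and x: "x \<in> gcar X" and mx: "edn X x = m" and g: "g \<in> carrier (grp X x)"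
  shows "yeq Y B dag (lift1 X Y B (Gen x) (lift1 X Y B (Elt (edn X x) (hdn X x g)) \<sigma>))
     (lift1 X Y B (Elt (eup X x) (hdn X (ebar X x) (hbar X x g))) (lift1 X Y B (Gen x) \<sigma>))"
proof -
  obtain z qw b where s: "\<sigma> = (z, qw, b)" by (cases \<sigma>) auto
  have zV: "z \<in> Vb B" and rz: "rho B z = m" and W: "gwalk Y dag qw (lam B z)" and b: "b \<in> bset B z"
    using v s by auto
  have zc: "z \<in> bcar B" using zV by (simp add: Vb_iff)
  show ?thesis
  proof (cases "x \<in> Vx X")
    case True
    have "hdn X x g = g" "hbar X x g = g" using gog_Vx_hom[OF X True g] by auto
    moreover have "ebar X x = x" "eup X x = x" using Vx_ebar[OF X True] Vx_eup[OF X True] by auto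
    ultimately show ?thesis using True s by (simp add: yeq_refl)
  next
    case False
    obtain e g0 be where E: "e \<in> bcar B" "e \<notin> Vb B" "rho B e = x" "bdn B e = z"
        "g0 \<in> carrier (grp Y (lam B z))" "be \<in> bset B e" "b = lact B z g0 (cdn B e be)"
        and Yq: "yeq Y B dag (lift1 X Y B (Gen x) (z, qw, b)) (out B z qw e (g0, be))"
      using lift1_gen_edge[OF v[unfolded s] x False mx] by blast
    have gr: "g \<in> carrier (grp X (rho B e))" using g E(3) by simp
    have gm: "hdn X x g \<in> carrier (grp X (rho B z))"
      using hom_in[OF gog_grp(2)[OF X x] g] mx rz by simp
    have cd: "cdn B e be \<in> bset B z" using cmaps(1)[OF E(1) E(6)] E(4) by simp
    have rbe: "ract B e be g \<in> bset B e" using ract_closed[OF E(1) gr E(6)] .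
    have b2: "ract B z b (hdn X x g) = lact B z g0 (cdn B e (ract B e be g))"
      using E(7) lr_comm[OF zc E(5) gm cd] cmaps_ract(1)[OF E(1) E(6) gr] E(3) E(4) by simp
    have v2: "vst Y B dag m (z, qw, ract B z b (hdn X x g))" using zV rz W ract_closed[OF zc gm b] by simp
    have L: "lift1 X Y B (Gen x) (lift1 X Y B (Elt (edn X x) (hdn X x g)) (z, qw, b))
       = lift1 X Y B (Gen x) (z, qw, lact B z g0 (cdn B e (ract B e be g)))" using b2 by simp
    have Y1: "yeq Y B dag (lift1 X Y B (Gen x) (z, qw, lact B z g0 (cdn B e (ract B e be g))))
        (out B z qw e (g0, ract B e be g))"
      using DL[OF zV x False _ E(1) E(3) E(4) E(5) rbe W] mx rz by simp
    define gp where "gp = hdn X (ebar X x) (hbar X x g)"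
    have fo: "fst (lift1 X Y B (Gen x) (z, qw, b)) = bup B e" using yeq_fst[OF Yq] by (simp add: out_def)
    have gpc: "gp \<in> carrier (grp X (eup X x))"
      using hom_in[OF gog_grp(2)[OF X gog_graph(1)[OF X x]] hom_in[OF gog_grp(3)[OF X x] g]]
      unfolding gp_def eup_def .
    have wx: "gwalk X (rho B (fst (lift1 X Y B (Gen x) (z, qw, b)))) [Elt (eup X x) gp] (eup X x)"
      using fo rho_bup[OF E(1)] E(3) gpc eup_Vx[OF X x] by simp
    have Y2: "yeq Y B dag (lift1 X Y B (Elt (eup X x) gp) (lift1 X Y B (Gen x) (z, qw, b)))
        (lift1 X Y B (Elt (eup X x) gp) (out B z qw e (g0, be)))"
      using L2y[OF Yq wx] .
    have eb: "bbar B e \<in> bcar B" using bgraph(1)[OF E(1)] .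
    have cbe: "cbar B e be \<in> bset B (bbar B e)" using cmaps(2)[OF E(1) E(6)] .
    have hbg: "hbar X (rho B e) g \<in> carrier (grp X (rho B (bbar B e)))"
      using hom_in[OF gog_grp(3)[OF X x] g] rho_mor(3)[OF E(1)] E(3) by simp
    have "cup B e (ract B e be g) = cdn B (bbar B e) (ract B (bbar B e) (cbar B e be) (hbar X (rho B e) g))"
      unfolding cup_def using cmaps_ract(2)[OF E(1) E(6) gr] by simp
    also have "\<dots> = ract B (bdn B (bbar B e)) (cdn B (bbar B e) (cbar B e be)) (hdn X (rho B (bbar B e)) (hbar X (rho B e) g))"
      using cmaps_ract(1)[OF eb cbe hbg] .
    also have "\<dots> = ract B (bup B e) (cup B e be) gp"
      unfolding gp_def cup_def bup_def using rho_mor(3)[OF E(1)] E(3) by simp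
    finally have cupr: "cup B e (ract B e be g) = ract B (bup B e) (cup B e be) gp" .
    have eq: "lift1 X Y B (Elt (eup X x) gp) (out B z qw e (g0, be)) = out B z qw e (g0, ract B e be g)"
      unfolding out_def by (simp add: cupr)
    show ?thesis using yeq_trans[OF Y1 yeq_sym[OF Y2[unfolded eq]]] s L unfolding gp_def by simp
  qed
qed

lemma L3:
  assumes br: "brel X l r" and v: "vst Y B dag m \<sigma>" and W: "gwalk X m l k"
  shows "yeq Y B dag (lift X Y B l \<sigma>) (lift X Y B r \<sigma>)"
proof -
  obtain z qw b where s: "\<sigma> = (z, qw, b)" by (cases \<sigma>) auto
  have zV: "z \<in> Vb B" and rz: "rho B z = m" and Wq: "gwalk Y dag qw (lam B z)" and b: "b \<in> bset B z"
    using v s by auto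
  have zc: "z \<in> bcar B" using zV by (simp add: Vb_iff)
  from br show ?thesis
  proof (cases rule: brel_cases)
    case (c1 u g h)
    then have um: "u = m" using W by auto
    have "ract B z (ract B z b g) h = ract B z b (g \<otimes>\<^bsub>grp X (rho B z)\<^esub> h)"
      using ract_mult[OF zc _ _ b, of g h] c1 um rz by simp
    then show ?thesis using c1 s um rz by (simp add: yeq_refl)
  next
    case (c2 u)
    then have um: "u = m" using W by auto
    then show ?thesis using c2 s ract_one[OF zc b] rz by (simp add: yeq_refl)
  next
    case (c3 u)
    then show ?thesis using s by (simp add: yeq_refl)
  next
    case (c4 x)
    then have "edn X x = m" using W by auto
    then show ?thesis using L3_c4[OF v c4(1)] c4 by simp
  next
    case (c5 x g)
    then have "edn X x = m" using W by auto
    then show ?thesis using L3_c5[OF v c5(1) _ c5(2)] c5 by simp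
  qed
qed

lemma L5:
  assumes st: "gstep X v a a'" and sv: "vst Y B dag v \<sigma>"
  shows "yeq Y B dag (lift X Y B a \<sigma>) (lift X Y B a' \<sigma>)"
proof -
  obtain u l r w where br: "brel X l r" and
    e: "(a = u @ l @ w \<and> a' = u @ r @ w) \<or> (a = u @ r @ w \<and> a' = u @ l @ w)"
    using st unfolding gstep_def by blast
  obtain t where ta: "gwalk X v a t" using st unfolding gstep_def by blast
  obtain t' where ta': "gwalk X v a' t'" using st unfolding gstep_def by blast
  have key: "yeq Y B dag (lift X Y B (u @ l @ w) \<sigma>) (lift X Y B (u @ r @ w) \<sigma>)"
    if wl: "gwalk X v (u @ l @ w) t0" for t0
  proof -
    obtain mm k where 1: "gwalk X v u mm" "gwalk X mm l k" "gwalk X k w t0"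
      using wl unfolding walk3[OF X] by blast
    have vu: "vst Y B dag mm (lift X Y B u \<sigma>)" by (rule lift_vst[OF sv 1(1)])
    have Y1: "yeq Y B dag (lift X Y B l (lift X Y B u \<sigma>)) (lift X Y B r (lift X Y B u \<sigma>))"
      by (rule L3[OF br vu 1(2)])
    have vl: "vst Y B dag k (lift X Y B l (lift X Y B u \<sigma>))" by (rule lift_vst[OF vu 1(2)])
    have "yeq Y B dag (lift X Y B w (lift X Y B l (lift X Y B u \<sigma>))) (lift X Y B w (lift X Y B r (lift X Y B u \<sigma>)))"
      by (rule L2w[OF Y1 vl 1(3)])
    then show ?thesis by (simp add: lift_append)
  qed
  from e show ?thesis
  proof
    assume h: "a = u @ l @ w \<and> a' = u @ r @ w"
    then show ?thesis using key[of t] ta by simp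
  next
    assume h: "a = u @ r @ w \<and> a' = u @ l @ w"
    then show ?thesis using yeq_sym[OF key[of t']] ta' by simp
  qed
qed

lemma L5s:
  assumes st: "(gstep X v)\<^sup>*\<^sup>* a a'" and sv: "vst Y B dag v \<sigma>"
  shows "yeq Y B dag (lift X Y B a \<sigma>) (lift X Y B a' \<sigma>)"
  using st
proof (induction rule: rtranclp_induct)
  case base then show ?case by (rule yeq_refl)
next
  case (step b c)
  show ?case by (rule yeq_trans[OF step(3) L5[OF step(2) sv]])
qed

end



definition invl :: "('x, 'gx) gog \<Rightarrow> ('x, 'gx) letter \<Rightarrow> ('x, 'gx) letter" where
  "invl X l = (case l of Gen x \<Rightarrow> Gen (ebar X x) | Elt u g \<Rightarrow> Elt u (inv\<^bsub>grp X u\<^esub> g))"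

definition invw :: "('x, 'gx) gog \<Rightarrow> ('x, 'gx) letter list \<Rightarrow> ('x, 'gx) letter list" where
  "invw X a = rev (map (invl X) a)"

lemma invw_Nil[simp]: "invw X [] = []" by (simp add: invw_def)
lemma invw_Cons[simp]: "invw X (l # a) = invw X a @ [invl X l]" by (simp add: invw_def)

lemma invl_walk:
  assumes G: "is_gog G" and w: "gwalk G x [l] y"
  shows "gwalk G y [invl G l] x"
proof (cases l)
  case (Gen f)
  then have f: "f \<in> gcar G" "edn G f = x" "y = eup G f" using w by auto
  have "edn G (ebar G f) = eup G f" by (simp add: eup_def)
  moreover have "eup G (ebar G f) = edn G f" using eup_ebar[OF G f(1)] .
  ultimately show ?thesis using Gen f gog_graph(1)[OF G f(1)] edn_Vx[OF G f(1)] by (simp add: invl_def)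
next
  case (Elt u g)
  then have u: "u \<in> Vx G" "u = x" "g \<in> carrier (grp G u)" "y = x" using w by auto
  have "group (grp G u)" using gog_grp(1)[OF G] u(1) by (simp add: Vx_iff)
  then have "inv\<^bsub>grp G u\<^esub> g \<in> carrier (grp G u)" using u(3) by (simp add: group.inv_closed)
  then have "gwalk G x [Elt x (inv\<^bsub>grp G x\<^esub> g)] x" using u(1,2) by simp
  then show ?thesis using Elt by (simp add: invl_def u(2) u(4))
qed

lemma invw_walk:
  assumes G: "is_gog G" and w: "gwalk G x a y"
  shows "gwalk G y (invw G a) x"
  using w
proof (induction a arbitrary: x)
  case Nil
  then have "x \<in> Vx G" "x = y" by auto
  then show ?case by simp
next
  case (Cons l a)
  obtain x' where w: "gwalk G x [l] x'" "gwalk G x' a y" using walk_Cons_split[OF G Cons(2)] by blast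
  have 1: "gwalk G y (invw G a) x'" by (rule Cons(1)[OF w(2)])
  have 2: "gwalk G x' [invl G l] x" by (rule invl_walk[OF G w(1)])
  show ?case using 1 2 gwalk_append[OF G] by auto
qed

lemma invl_invl:
  assumes G: "is_gog G" and w: "gwalk G x [l] y"
  shows "invl G (invl G l) = l"
proof (cases l)
  case (Gen f)
  then have "f \<in> gcar G" using w by auto
  then show ?thesis using Gen gog_graph(3)[OF G] by (simp add: invl_def)
next
  case (Elt u g)
  then have u: "u \<in> Vx G" "g \<in> carrier (grp G u)" using w by auto
  have "group (grp G u)" using gog_grp(1)[OF G] u(1) by (simp add: Vx_iff)
  then show ?thesis using Elt u by (simp add: invl_def group.inv_inv)
qed

lemma invw_invw:
  assumes G: "is_gog G" and w: "gwalk G x a y"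
  shows "invw G (invw G a) = a"
  using w
proof (induction a arbitrary: x)
  case Nil then show ?case by simp
next
  case (Cons l a)
  obtain x' where w: "gwalk G x [l] x'" "gwalk G x' a y" using walk_Cons_split[OF G Cons(2)] by blast
  have "invw G (invw G a @ [invl G l]) = invl G (invl G l) # invw G (invw G a)"
    by (simp add: invw_def)
  then show ?case using Cons(1)[OF w(2)] invl_invl[OF G w(1)] by simp
qed

context gbs_ctx
begin

lemma cancel1:
  assumes v: "vst Y B dag x \<sigma>" and w: "gwalk X x [l] y"
  shows "yeq Y B dag (lift1 X Y B (invl X l) (lift1 X Y B l \<sigma>)) \<sigma>"
proof (cases l)
  case (Gen f)
  then have f: "f \<in> gcar X" "edn X f = x" using w by auto
  show ?thesis using L3_c4[OF v f] Gen by (simp add: invl_def)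
next
  case (Elt u g)
  obtain z qw b where s: "\<sigma> = (z, qw, b)" by (cases \<sigma>) auto
  have zV: "z \<in> Vb B" and rz: "rho B z = x" and b: "b \<in> bset B z" using v s by auto
  have zc: "z \<in> bcar B" using zV by (simp add: Vb_iff)
  have u: "u \<in> Vx X" "u = x" "g \<in> carrier (grp X u)" using w Elt by auto
  have grp: "group (grp X u)" using gog_grp(1)[OF X] u(1) by (simp add: Vx_iff)
  have gz: "g \<in> carrier (grp X (rho B z))" and giz: "inv\<^bsub>grp X (rho B z)\<^esub> g \<in> carrier (grp X (rho B z))"
    using u rz grp by (auto simp: group.inv_closed)
  have "ract B z (ract B z b g) (inv\<^bsub>grp X (rho B z)\<^esub> g) = ract B z b (g \<otimes>\<^bsub>grp X (rho B z)\<^esub> inv\<^bsub>grp X (rho B z)\<^esub> g)"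
    using ract_mult[OF zc gz giz b] by simp
  also have "\<dots> = b" using grp u rz ract_one[OF zc b] gz by (simp add: group.r_inv)
  finally show ?thesis using s Elt u rz by (simp add: invl_def yeq_refl)
qed

lemma cancelw:
  assumes v: "vst Y B dag x \<sigma>" and w: "gwalk X x a y"
  shows "yeq Y B dag (lift X Y B (invw X a) (lift X Y B a \<sigma>)) \<sigma>"
  using v w
proof (induction a arbitrary: \<sigma> x)
  case Nil then show ?case by (simp add: yeq_refl)
next
  case (Cons l a)
  obtain x' where w: "gwalk X x [l] x'" "gwalk X x' a y" using walk_Cons_split[OF X Cons(3)] by blast
  define \<sigma>1 where "\<sigma>1 = lift1 X Y B l \<sigma>"
  have v1: "vst Y B dag x' \<sigma>1" unfolding \<sigma>1_def by (rule lift1_vst[OF Cons(2) w(1)])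
  have IH: "yeq Y B dag (lift X Y B (invw X a) (lift X Y B a \<sigma>1)) \<sigma>1" by (rule Cons(1)[OF v1 w(2)])
  have vA: "vst Y B dag x' (lift X Y B (invw X a) (lift X Y B a \<sigma>1))"
    using lift_vst[OF lift_vst[OF v1 w(2)] invw_walk[OF X w(2)]] .
  have rA: "rho B (fst (lift X Y B (invw X a) (lift X Y B a \<sigma>1))) = x'"
    using vA by (cases "lift X Y B (invw X a) (lift X Y B a \<sigma>1)") auto
  have wi: "gwalk X x' [invl X l] x" by (rule invl_walk[OF X w(1)])
  have Y1: "yeq Y B dag (lift1 X Y B (invl X l) (lift X Y B (invw X a) (lift X Y B a \<sigma>1))) (lift1 X Y B (invl X l) \<sigma>1)"
    using L2y[OF IH] wi rA by simp
  have Y2: "yeq Y B dag (lift1 X Y B (invl X l) \<sigma>1) \<sigma>" unfolding \<sigma>1_def by (rule cancel1[OF Cons(2) w(1)])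
  show ?case using yeq_trans[OF Y1 Y2] unfolding \<sigma>1_def by (simp add: lift_append)
qed

lemma cancelw2:
  assumes v: "vst Y B dag y \<tau>" and w: "gwalk X x a y"
  shows "yeq Y B dag (lift X Y B a (lift X Y B (invw X a) \<tau>)) \<tau>"
  using cancelw[OF v invw_walk[OF X w]] invw_invw[OF X w] by simp

end



fun Tm :: "('y, 'gy) gog \<Rightarrow> ('x, 'gx) gog \<Rightarrow> ('b, 'c, 'y, 'x, 'gy, 'gx) gbs \<Rightarrow> 'y \<Rightarrow> 'x
   \<Rightarrow> 'b \<times> ('y, 'gy) letter list \<times> 'c \<Rightarrow> ('x, 'gx) gmor
   \<Rightarrow> 'b \<times> ('y, 'gy, 'c, 'x, 'gx) triple set" where
  "Tm Y X B dag st (z, qw, b) p = (z, tcls Y X B dag st z ((dag, gcls Y dag qw), b, p))"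

definition PC :: "('y, 'gy) gog \<Rightarrow> ('x, 'gx) gog \<Rightarrow> ('b, 'c, 'y, 'x, 'gy, 'gx) gbs \<Rightarrow> 'y \<Rightarrow> 'b
   \<Rightarrow> ('y, 'gy, 'c, 'x, 'gx) triple \<Rightarrow> ('b \<times> ('y, 'gy) letter list \<times> 'c) set" where
  "PC Y X B dag z t = {\<tau>. \<exists>qw\<in>snd (fst t). \<exists>a\<in>snd (snd (snd t)).
      yeq Y B dag (lift X Y B a (z, qw, fst (snd t))) \<tau>}"

definition psi :: "('y, 'gy) gog \<Rightarrow> ('x, 'gx) gog \<Rightarrow> ('b, 'c, 'y, 'x, 'gy, 'gx) gbs \<Rightarrow> 'y
   \<Rightarrow> 'b \<times> ('y, 'gy, 'c, 'x, 'gx) triple set \<Rightarrow> ('b \<times> ('y, 'gy) letter list \<times> 'c) set" where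
  "psi Y X B dag s = (let t = (SOME t. t \<in> snd s);
      qw = (SOME w. w \<in> snd (fst t)); a = (SOME w. w \<in> snd (snd (snd t)))
     in {\<tau>. yeq Y B dag (lift X Y B a (fst s, qw, fst (snd t))) \<tau>})"

lemma tcls_mem: "t \<in> tcls Y X B dag st z s \<longleftrightarrow>
    (\<lambda>a b. tstep Y X B dag st z a b \<or> tstep Y X B dag st z b a)\<^sup>*\<^sup>* s t"
  by (simp add: tcls_def)

lemma tcls_self: "s \<in> tcls Y X B dag st z s"
  by (simp add: tcls_def)

lemma symcl_sym:
  assumes "(\<lambda>a b. R a b \<or> R b a)\<^sup>*\<^sup>* s t"
  shows "(\<lambda>a b. R a b \<or> R b a)\<^sup>*\<^sup>* t s"
  using assms
proof (induction rule: rtranclp_induct)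
  case (step b c)
  have "(\<lambda>a b. R a b \<or> R b a) c b" using step(2) by blast
  then show ?case using step(3) by (rule converse_rtranclp_into_rtranclp)
qed simp

lemma tcls_eq:
  assumes "(\<lambda>a b. tstep Y X B dag st z a b \<or> tstep Y X B dag st z b a)\<^sup>*\<^sup>* s t"
  shows "tcls Y X B dag st z s = tcls Y X B dag st z t"
proof -
  have 1: "(\<lambda>a b. tstep Y X B dag st z a b \<or> tstep Y X B dag st z b a)\<^sup>*\<^sup>* t s" using symcl_sym[OF assms] .
  have "\<And>c. (\<lambda>a b. tstep Y X B dag st z a b \<or> tstep Y X B dag st z b a)\<^sup>*\<^sup>* s c \<longleftrightarrow>
     (\<lambda>a b. tstep Y X B dag st z a b \<or> tstep Y X B dag st z b a)\<^sup>*\<^sup>* t c"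
    using rtranclp_trans[OF assms] rtranclp_trans[OF 1] by blast
  then have "(\<lambda>a b. tstep Y X B dag st z a b \<or> tstep Y X B dag st z b a)\<^sup>*\<^sup>* s =
     (\<lambda>a b. tstep Y X B dag st z a b \<or> tstep Y X B dag st z b a)\<^sup>*\<^sup>* t" by (intro ext)
  then show ?thesis unfolding tcls_def by simp
qed

lemma tcls_tstep:
  assumes "tstep Y X B dag st z s t"
  shows "tcls Y X B dag st z s = tcls Y X B dag st z t"
proof (rule tcls_eq)
  have "(\<lambda>a b. tstep Y X B dag st z a b \<or> tstep Y X B dag st z b a) s t" using assms by simp
  then show "(\<lambda>a b. tstep Y X B dag st z a b \<or> tstep Y X B dag st z b a)\<^sup>*\<^sup>* s t" by (rule r_into_rtranclp)
qed

lemma tstep_tdom: "tstep Y X B dag st z s t \<Longrightarrow> tdom Y X B dag st z s \<and> tdom Y X B dag st z t"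
  by (simp add: tstep_def)

lemma tcls_tdom:
  assumes "t \<in> tcls Y X B dag st z s" "tdom Y X B dag st z s"
  shows "tdom Y X B dag st z t"
  using assms(1) unfolding tcls_mem
proof (induction rule: rtranclp_induct)
  case base then show ?case using assms(2) .
next
  case (step b c) then show ?case using tstep_tdom by metis
qed

context gbs_ctx
begin

lemma T_ystep:
  assumes st: "ystep Y B dag \<sigma> \<tau>" and p: "p \<in> pi1 X (rho B (fst \<sigma>)) stx"
  shows "Tm Y X B dag stx \<sigma> p = Tm Y X B dag stx \<tau> p"
proof -
  obtain z qw b qw' b' where s: "\<sigma> = (z, qw, b)" "\<tau> = (z, qw', b')" and zV: "z \<in> Vb B"
    and W: "gwalk Y dag qw (lam B z)" and W': "gwalk Y dag qw' (lam B z)"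
    and b: "b \<in> bset B z" and b': "b' \<in> bset B z"
    and R: "(gstep Y dag qw qw' \<and> b = b') \<or>
      (\<exists>h\<in>carrier (grp Y (lam B z)). qw = qw' @ [Elt (lam B z) h] \<and> b' = lact B z h b)"
    using st unfolding ystep_def by blast
  from R show ?thesis
  proof
    assume r: "gstep Y dag qw qw' \<and> b = b'"
    have "gcls Y dag qw = gcls Y dag qw'" using gcls_eq[OF r_into_rtranclp[of "gstep Y dag", OF conjunct1[OF r]]] .
    then show ?thesis using s r by simp
  next
    assume "\<exists>h\<in>carrier (grp Y (lam B z)). qw = qw' @ [Elt (lam B z) h] \<and> b' = lact B z h b"
    then obtain h where h: "h \<in> carrier (grp Y (lam B z))" "qw = qw' @ [Elt (lam B z) h]" "b' = lact B z h b"
      by blast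
    have lzV: "lam B z \<in> Vx Y" using Vb_lam[OF zV] .
    have wh: "gwalk Y (lam B z) [Elt (lam B z) h] (lam B z)" using lzV h(1) by simp
    have gc: "gcomp Y (dag, gcls Y dag qw') (gel Y (lam B z) h) = (dag, gcls Y dag qw)"
      unfolding gel_def using gcomp_cls[OF Y W' wh] h(2) by simp
    have pz: "p \<in> pi1 X (rho B z) stx" using p s by simp
    have t1: "tdom Y X B dag stx z ((dag, gcls Y dag qw), b, p)"
      unfolding tdom_def using zV pi1_I[OF W] b pz by simp
    have t2: "tdom Y X B dag stx z ((dag, gcls Y dag qw'), b', p)"
      unfolding tdom_def using zV pi1_I[OF W'] b' pz by simp
    have "tstep Y X B dag stx z ((dag, gcls Y dag qw), b, p) ((dag, gcls Y dag qw'), b', p)"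
      unfolding tstep_def
      apply (intro conjI t1 t2 disjI1)
      apply (rule bexI[OF _ h(1)])
      using gc h(3) by simp
    then show ?thesis using s tcls_tstep by simp
  qed
qed

lemma T_yeq:
  assumes st: "yeq Y B dag \<sigma> \<tau>" and p: "p \<in> pi1 X (rho B (fst \<sigma>)) stx"
  shows "Tm Y X B dag stx \<sigma> p = Tm Y X B dag stx \<tau> p"
  using st[unfolded yeq_def]
proof (induction rule: rtranclp_induct)
  case base then show ?case by simp
next
  case (step b c)
  have fb: "fst b = fst \<sigma>" using yeq_fst[of dag \<sigma> b] step(1) unfolding yeq_def by simp
  have pb: "p \<in> pi1 X (rho B (fst b)) stx" using p fb by simp
  from step(2) show ?case
  proof
    assume h: "ystep Y B dag b c"
    show ?thesis using step(3) T_ystep[OF h pb] by (rule trans)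
  next
    assume h: "ystep Y B dag c b"
    then have "fst c = fst b" using ystep_props[OF h] by simp
    then have pc: "p \<in> pi1 X (rho B (fst c)) stx" using pb by simp
    show ?thesis using step(3) T_ystep[OF h pc, symmetric] by (rule trans)
  qed
qed

end



context gbs_ctx
begin

lemma yeq_class_eq:
  assumes "yeq Y B dag \<sigma> \<tau>"
  shows "{\<mu>. yeq Y B dag \<sigma> \<mu>} = {\<mu>. yeq Y B dag \<tau> \<mu>}"
proof (rule Set.set_eqI)
  fix \<mu>
  show "\<mu> \<in> {\<mu>. yeq Y B dag \<sigma> \<mu>} \<longleftrightarrow> \<mu> \<in> {\<mu>. yeq Y B dag \<tau> \<mu>}"
    using yeq_trans[OF yeq_sym[OF assms], of \<mu>] yeq_trans[OF assms, of \<mu>] by auto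
qed

lemma tdomD:
  assumes "tdom Y X B dag stx z t"
  shows "z \<in> Vb B" "fst t \<in> pi1 Y dag (lam B z)" "fst (snd t) \<in> bset B z" "snd (snd t) \<in> pi1 X (rho B z) stx"
  using assms unfolding tdom_def by auto

lemma PC_rep:
  assumes td: "tdom Y X B dag stx z t" and qw: "qw \<in> snd (fst t)" and a: "a \<in> snd (snd (snd t))"
  shows "PC Y X B dag z t = {\<tau>. yeq Y B dag (lift X Y B a (z, qw, fst (snd t))) \<tau>}"
proof -
  note T = tdomD[OF td]
  define b where "b = fst (snd t)"
  have pq: "gwalk Y dag qw (lam B z)" "fst t = (dag, gcls Y dag qw)" using pi1_mem[OF Y T(2) qw] by auto
  have pa: "gwalk X (rho B z) a stx" "snd (snd t) = (rho B z, gcls X (rho B z) a)" using pi1_mem[OF X T(4) a] by auto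
  have v: "vst Y B dag (rho B z) (z, qw, b)" using T(1) pq(1) T(3) b_def by simp
  have key: "yeq Y B dag (lift X Y B a' (z, qw', b)) (lift X Y B a (z, qw, b))"
    if qw': "qw' \<in> snd (fst t)" and a': "a' \<in> snd (snd (snd t))" for qw' a'
  proof -
    have pq': "gwalk Y dag qw' (lam B z)" "fst t = (dag, gcls Y dag qw')" using pi1_mem[OF Y T(2) qw'] by auto
    have pa': "gwalk X (rho B z) a' stx" "snd (snd t) = (rho B z, gcls X (rho B z) a')" using pi1_mem[OF X T(4) a'] by auto
    have e1: "(gstep Y dag)\<^sup>*\<^sup>* qw' qw" using qw pq'(2) by (simp add: gcls_mem)
    have e2: "(gstep X (rho B z))\<^sup>*\<^sup>* a' a" using a pa'(2) by (simp add: gcls_mem)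
    have v': "vst Y B dag (rho B z) (z, qw', b)" using T(1) pq'(1) T(3) b_def by simp
    have y1: "yeq Y B dag (z, qw', b) (z, qw, b)" using yeq_R1s[OF T(1) pq'(1) e1 T(3)] b_def by simp
    have y2: "yeq Y B dag (lift X Y B a' (z, qw', b)) (lift X Y B a' (z, qw, b))"
      by (rule L2w[OF y1 v' pa'(1)])
    have y3: "yeq Y B dag (lift X Y B a' (z, qw, b)) (lift X Y B a (z, qw, b))"
      by (rule L5s[OF e2 v])
    show ?thesis by (rule yeq_trans[OF y2 y3])
  qed
  show ?thesis
  proof (rule Set.set_eqI)
    fix \<tau>
    show "\<tau> \<in> PC Y X B dag z t \<longleftrightarrow> \<tau> \<in> {\<tau>. yeq Y B dag (lift X Y B a (z, qw, fst (snd t))) \<tau>}"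
    proof
      assume "\<tau> \<in> PC Y X B dag z t"
      then obtain qw' a' where "qw' \<in> snd (fst t)" "a' \<in> snd (snd (snd t))"
        "yeq Y B dag (lift X Y B a' (z, qw', fst (snd t))) \<tau>" unfolding PC_def by blast
      then show "\<tau> \<in> {\<tau>. yeq Y B dag (lift X Y B a (z, qw, fst (snd t))) \<tau>}"
        using key yeq_sym yeq_trans b_def by (metis mem_Collect_eq)
    next
      assume "\<tau> \<in> {\<tau>. yeq Y B dag (lift X Y B a (z, qw, fst (snd t))) \<tau>}"
      then show "\<tau> \<in> PC Y X B dag z t" unfolding PC_def using qw a by blast
    qed
  qed
qed

lemma PC_tstep:
  assumes st: "tstep Y X B dag stx z t1 t2"
  shows "PC Y X B dag z t1 = PC Y X B dag z t2"
proof -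
  have td1: "tdom Y X B dag stx z t1" and td2: "tdom Y X B dag stx z t2" using st unfolding tstep_def by auto
  note T1 = tdomD[OF td1] and T2 = tdomD[OF td2]
  have zc: "z \<in> bcar B" using T1(1) by (simp add: Vb_iff)
  from st have R: "(\<exists>h\<in>carrier (grp Y (lam B z)).
         fst t1 = gcomp Y (fst t2) (gel Y (lam B z) h) \<and>
         fst (snd t2) = lact B z h (fst (snd t1)) \<and> snd (snd t2) = snd (snd t1))
    \<or> (\<exists>g\<in>carrier (grp X (rho B z)).
         fst t2 = fst t1 \<and> fst (snd t1) = ract B z (fst (snd t2)) g \<and>
         snd (snd t2) = gcomp X (gel X (rho B z) g) (snd (snd t1)))"
    unfolding tstep_def by blast
  from R show ?thesis
  proof
    assume "\<exists>h\<in>carrier (grp Y (lam B z)).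
         fst t1 = gcomp Y (fst t2) (gel Y (lam B z) h) \<and>
         fst (snd t2) = lact B z h (fst (snd t1)) \<and> snd (snd t2) = snd (snd t1)"
    then obtain h where h: "h \<in> carrier (grp Y (lam B z))" "fst t1 = gcomp Y (fst t2) (gel Y (lam B z) h)"
      "fst (snd t2) = lact B z h (fst (snd t1))" "snd (snd t2) = snd (snd t1)" by blast
    obtain qw where qw: "qw \<in> snd (fst t2)" "gwalk Y dag qw (lam B z)" "fst t2 = (dag, gcls Y dag qw)"
      using pi1_ex[OF T2(2)] by blast
    obtain a where a: "a \<in> snd (snd (snd t2))" using pi1_ex[OF T2(4)] by blast
    have lzV: "lam B z \<in> Vx Y" using Vb_lam[OF T1(1)] .
    have wh: "gwalk Y (lam B z) [Elt (lam B z) h] (lam B z)" using lzV h(1) by simp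
    have f1: "fst t1 = (dag, gcls Y dag (qw @ [Elt (lam B z) h]))"
      using h(2) qw(3) gcomp_cls[OF Y qw(2) wh] unfolding gel_def by simp
    have qw1: "qw @ [Elt (lam B z) h] \<in> snd (fst t1)" using f1 gcls_self by simp
    have a1: "a \<in> snd (snd (snd t1))" using a h(4) by simp
    have W1: "gwalk Y dag (qw @ [Elt (lam B z) h]) (lam B z)" using walk_app[OF Y qw(2)] wh by simp
    have v: "vst Y B dag (rho B z) (z, qw @ [Elt (lam B z) h], fst (snd t1))" using T1(1) W1 T1(3) by simp
    have pa: "gwalk X (rho B z) a stx" using pi1_mem[OF X T1(4) a1] by simp
    have y: "yeq Y B dag (z, qw @ [Elt (lam B z) h], fst (snd t1)) (z, qw, fst (snd t2))"
      using yeq_R2[OF T1(1) qw(2) h(1) T1(3)] h(3) by simp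
    have "yeq Y B dag (lift X Y B a (z, qw @ [Elt (lam B z) h], fst (snd t1))) (lift X Y B a (z, qw, fst (snd t2)))"
      by (rule L2w[OF y v pa])
    then show ?thesis using PC_rep[OF td1 qw1 a1] PC_rep[OF td2 qw(1) a] yeq_class_eq by simp
  next
    assume "\<exists>g\<in>carrier (grp X (rho B z)).
         fst t2 = fst t1 \<and> fst (snd t1) = ract B z (fst (snd t2)) g \<and>
         snd (snd t2) = gcomp X (gel X (rho B z) g) (snd (snd t1))"
    then obtain g where g: "g \<in> carrier (grp X (rho B z))" "fst t2 = fst t1"
      "fst (snd t1) = ract B z (fst (snd t2)) g" "snd (snd t2) = gcomp X (gel X (rho B z) g) (snd (snd t1))" by blast
    obtain a where a: "a \<in> snd (snd (snd t1))" "gwalk X (rho B z) a stx" "snd (snd t1) = (rho B z, gcls X (rho B z) a)"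
      using pi1_ex[OF T1(4)] by blast
    obtain qw where qw: "qw \<in> snd (fst t1)" using pi1_ex[OF T1(2)] by blast
    have rzV: "rho B z \<in> Vx X" using Vb_rho[OF T1(1)] .
    have wg: "gwalk X (rho B z) [Elt (rho B z) g] (rho B z)" using rzV g(1) by simp
    have s2: "snd (snd t2) = (rho B z, gcls X (rho B z) ([Elt (rho B z) g] @ a))"
      using g(4) a(3) gcomp_cls[OF X wg a(2)] unfolding gel_def by simp
    have a2: "Elt (rho B z) g # a \<in> snd (snd (snd t2))" using s2 gcls_self by simp
    have qw2: "qw \<in> snd (fst t2)" using qw g(2) by simp
    have "lift X Y B (Elt (rho B z) g # a) (z, qw, fst (snd t2)) = lift X Y B a (z, qw, fst (snd t1))"
      using g(3) by simp
    then show ?thesis using PC_rep[OF td1 qw a(1)] PC_rep[OF td2 qw2 a2] by simp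
  qed
qed

lemma PC_tcls:
  assumes "t \<in> tcls Y X B dag stx z t0"
  shows "PC Y X B dag z t = PC Y X B dag z t0"
  using assms unfolding tcls_mem
proof (induction rule: rtranclp_induct)
  case (step b c)
  have "PC Y X B dag z b = PC Y X B dag z c" using step(2) PC_tstep by metis
  then show ?case using step(3) by simp
qed simp

lemma psi_eq:
  assumes td: "tdom Y X B dag stx z t0"
  shows "psi Y X B dag (z, tcls Y X B dag stx z t0) = PC Y X B dag z t0"
proof -
  define t where "t = (SOME t. t \<in> tcls Y X B dag stx z t0)"
  have t: "t \<in> tcls Y X B dag stx z t0" unfolding t_def using tcls_self by (rule someI)
  have tdt: "tdom Y X B dag stx z t" using tcls_tdom[OF t td] .
  note T = tdomD[OF tdt]
  define qw where "qw = (SOME w. w \<in> snd (fst t))"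
  have qw: "qw \<in> snd (fst t)" unfolding qw_def using pi1_ex[OF T(2)] by (metis someI)
  define a where "a = (SOME w. w \<in> snd (snd (snd t)))"
  have a: "a \<in> snd (snd (snd t))" unfolding a_def using pi1_ex[OF T(4)] by (metis someI)
  have "psi Y X B dag (z, tcls Y X B dag stx z t0) = {\<tau>. yeq Y B dag (lift X Y B a (z, qw, fst (snd t))) \<tau>}"
    unfolding psi_def Let_def a_def qw_def t_def by simp
  also have "\<dots> = PC Y X B dag z t" using PC_rep[OF tdt qw a] by simp
  also have "\<dots> = PC Y X B dag z t0" using PC_tcls[OF t] .
  finally show ?thesis .
qed

lemma psi_T:
  assumes v: "vst Y B dag x \<sigma>" and w: "gwalk X x a stx"
  shows "psi Y X B dag (Tm Y X B dag stx \<sigma> (x, gcls X x a)) = {\<tau>. yeq Y B dag (lift X Y B a \<sigma>) \<tau>}"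
proof -
  obtain z qw b where s: "\<sigma> = (z, qw, b)" by (cases \<sigma>) auto
  have zV: "z \<in> Vb B" and rz: "rho B z = x" and W: "gwalk Y dag qw (lam B z)" and b: "b \<in> bset B z"
    using v s by auto
  have td: "tdom Y X B dag stx z ((dag, gcls Y dag qw), b, (x, gcls X x a))"
    unfolding tdom_def using zV pi1_I[OF W] b pi1_I[OF w] rz by simp
  have "psi Y X B dag (Tm Y X B dag stx \<sigma> (x, gcls X x a)) = PC Y X B dag z ((dag, gcls Y dag qw), b, (x, gcls X x a))"
    using psi_eq[OF td] s by simp
  also have "\<dots> = {\<tau>. yeq Y B dag (lift X Y B a (z, qw, b)) \<tau>}"
  proof -
    have q1: "qw \<in> snd (fst ((dag, gcls Y dag qw), b, (x, gcls X x a)))" by (simp add: gcls_self)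
    have a1: "a \<in> snd (snd (snd ((dag, gcls Y dag qw), b, (x, gcls X x a))))" by (simp add: gcls_self)
    show ?thesis using PC_rep[OF td q1 a1] by simp
  qed
  finally show ?thesis using s by simp
qed

end



context gbs_ctx
begin

abbreviation SR where "SR dag stx \<equiv> (\<lambda>s t. sstep Y X B dag stx s t \<or> sstep Y X B dag stx t s)"

lemma Tm_tstep_eq:
  assumes "tstep Y X B dag stx z s t"
  shows "(z, tcls Y X B dag stx z s) = (z, tcls Y X B dag stx z t)"
  using tcls_tstep[OF assms] by simp

lemma L7:
  assumes v: "vst Y B dag x \<sigma>" and w: "gwalk X x a stx"
  shows "(SR dag stx)\<^sup>*\<^sup>* (Tm Y X B dag stx \<sigma> (x, gcls X x a))
           (Tm Y X B dag stx (lift X Y B a \<sigma>) (stx, gcls X stx []))"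
  using v w
proof (induction a arbitrary: \<sigma> x)
  case Nil
  then have "x = stx" by auto
  then show ?case by simp
next
  case (Cons l a)
  obtain x' where w: "gwalk X x [l] x'" "gwalk X x' a stx" using walk_Cons_split[OF X Cons(3)] by blast
  obtain z qw b where s: "\<sigma> = (z, qw, b)" by (cases \<sigma>) auto
  have zV: "z \<in> Vb B" and rz: "rho B z = x" and W: "gwalk Y dag qw (lam B z)" and b: "b \<in> bset B z"
    using Cons(2) s by auto
  have zc: "z \<in> bcar B" using zV by (simp add: Vb_iff)
  have v1: "vst Y B dag x' (lift1 X Y B l \<sigma>)" by (rule lift1_vst[OF Cons(2) w(1)])
  have IH: "(SR dag stx)\<^sup>*\<^sup>* (Tm Y X B dag stx (lift1 X Y B l \<sigma>) (x', gcls X x' a))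
           (Tm Y X B dag stx (lift X Y B (l # a) \<sigma>) (stx, gcls X stx []))"
    using Cons(1)[OF v1 w(2)] by simp
  have step: "(SR dag stx)\<^sup>*\<^sup>* (Tm Y X B dag stx \<sigma> (x, gcls X x (l # a)))
      (Tm Y X B dag stx (lift1 X Y B l \<sigma>) (x', gcls X x' a))"
  proof (cases l)
    case (Elt u g)
    then have u: "u = x" "g \<in> carrier (grp X x)" "x' = x" using w(1) by auto
    have xV: "x \<in> Vx X" using rz Vb_rho[OF zV] by simp
    have wg: "gwalk X x [Elt x g] x" using xV u by simp
    have w2: "gwalk X x a stx" using w(2) u(3) by simp
    have P: "gcomp X (gel X (rho B z) g) (x, gcls X x a) = (x, gcls X x (Elt x g # a))"
      using gcomp_cls[OF X wg w2] rz u unfolding gel_def by simp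
    have gz: "g \<in> carrier (grp X (rho B z))" using u rz by simp
    have t1: "tdom Y X B dag stx z ((dag, gcls Y dag qw), ract B z b g, (x, gcls X x a))"
      unfolding tdom_def using zV pi1_I[OF W] ract_closed[OF zc gz b] pi1_I[OF w2] rz u by simp
    have wl: "gwalk X x (Elt x g # a) stx" using Cons(3) Elt u by simp
    have t2: "tdom Y X B dag stx z ((dag, gcls Y dag qw), b, (x, gcls X x (Elt x g # a)))"
      unfolding tdom_def using zV pi1_I[OF W] b pi1_I[OF wl] rz by simp
    have TS: "tstep Y X B dag stx z ((dag, gcls Y dag qw), ract B z b g, (x, gcls X x a))
        ((dag, gcls Y dag qw), b, (x, gcls X x (Elt x g # a)))"
      unfolding tstep_def
      apply (intro conjI t1 t2 disjI2)
      apply (rule bexI[OF _ gz])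
      using P by simp
    then have "Tm Y X B dag stx \<sigma> (x, gcls X x (l # a)) = Tm Y X B dag stx (lift1 X Y B l \<sigma>) (x', gcls X x' a)"
      using s Elt u tcls_tstep[OF TS, symmetric] by simp
    then show ?thesis by simp
  next
    case (Gen f)
    then have f: "f \<in> gcar X" "edn X f = x" "x' = eup X f" using w(1) by auto
    show ?thesis
    proof (cases "f \<in> Vx X")
      case True
      have x'x: "x' = x" using f True Vx_eup[OF X True] by (simp add: Vx_iff)
      have wl: "gwalk X x ([] @ [Gen f] @ a) stx" using Cons(3) Gen by simp
      have "gcls X x ([] @ [Gen f] @ a) = gcls X x ([] @ [] @ a)"
        using gcls_eq[OF r_into_rtranclp[of "gstep X x", OF gstep_ctx(1)[OF X brel3[OF True] wl]]] .
      then show ?thesis using s Gen True x'x by simp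
    next
      case False
      obtain e g0 be where E: "e \<in> bcar B" "e \<notin> Vb B" "rho B e = f" "bdn B e = z"
        "g0 \<in> carrier (grp Y (lam B z))" "be \<in> bset B e" "b = lact B z g0 (cdn B e be)"
        and Yq: "yeq Y B dag (lift1 X Y B (Gen f) (z, qw, b)) (out B z qw e (g0, be))"
        using lift1_gen_edge[OF Cons(2)[unfolded s] f(1) False f(2)] by blast
      have lzV: "lam B z \<in> Vx Y" using Vb_lam[OF zV] .
      have cd: "cdn B e be \<in> bset B z" using cmaps(1)[OF E(1) E(6)] E(4) by simp
      have Wg: "gwalk Y dag (qw @ [Elt (lam B z) g0]) (lam B z)" using walk_app[OF Y W] lzV E(5) by simp
      have P: "(x, gcls X x (l # a)) \<in> pi1 X (rho B z) stx" using pi1_I[OF Cons(3)] rz by simp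
      have eq1: "Tm Y X B dag stx \<sigma> (x, gcls X x (l # a)) =
          Tm Y X B dag stx (z, qw @ [Elt (lam B z) g0], cdn B e be) (x, gcls X x (l # a))"
        using T_yeq[OF yeq_sym[OF yeq_R2[OF zV W E(5) cd]]] P s E(7) by simp
      have fo: "fst (lift1 X Y B (Gen f) (z, qw, b)) = bup B e" using yeq_fst[OF Yq] by (simp add: out_def)
      have P2: "(x', gcls X x' a) \<in> pi1 X (rho B (fst (lift1 X Y B (Gen f) (z, qw, b)))) stx"
        using pi1_I[OF w(2)] fo rho_bup[OF E(1)] E(3) f(3) by simp
      have eq2: "Tm Y X B dag stx (lift1 X Y B l \<sigma>) (x', gcls X x' a) =
          Tm Y X B dag stx (out B z qw e (g0, be)) (x', gcls X x' a)"
        using T_yeq[OF Yq P2] s Gen by simp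
      define q where "q = (dag, gcls Y dag (qw @ [Elt (lam B z) g0]))"
      have le: "lam B e \<in> gcar Y" "edn Y (lam B e) = lam B z" using lam_mor[OF E(1)] E(4) by auto
      have q: "q \<in> pi1 Y dag (edn Y (lam B (e)))" unfolding q_def using pi1_I[OF Wg] le by simp
      have p: "(x, gcls X x (l # a)) \<in> pi1 X (edn X (rho B e)) stx" using pi1_I[OF Cons(3)] E(3) f(2) by simp
      have wge: "gwalk Y (lam B z) [Gen (lam B e)] (eup Y (lam B e))"
        using le eup_Vx[OF Y le(1)] by simp
      have gq: "gcomp Y q (ggen Y (lam B e)) = (dag, gcls Y dag (qw @ [Elt (lam B z) g0, Gen (lam B e)]))"
        unfolding q_def ggen_def using gcomp_cls[OF Y Wg wge] le by simp
      define fb where "fb = ebar X f"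
      have fbg: "fb \<in> gcar X" using gog_graph(1)[OF X f(1)] fb_def by simp
      have fbd: "edn X fb = x'" using f(3) fb_def by (simp add: eup_def)
      have fbu: "eup X fb = x" using eup_ebar[OF X f(1)] f(2) fb_def by simp
      have wfb: "gwalk X x' [Gen fb] x" using fbg fbd fbu f(2) edn_Vx[OF X f(1)] by simp
      have wl: "gwalk X x (Gen f # a) stx" using Cons(3) Gen by simp
      have gp1: "gcomp X (ggen X fb) (x, gcls X x (Gen f # a)) = (x', gcls X x' ([Gen fb] @ Gen f # a))"
        unfolding ggen_def using gcomp_cls[OF X wfb wl] fbd by simp
      have wl2: "gwalk X x' ([] @ [Gen fb, Gen (ebar X fb)] @ a) stx"
        using walk_app[OF X wfb, of "Gen f # a" stx] wl gog_graph(3)[OF X f(1)] fb_def by simp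
      have "gcls X x' ([] @ [Gen fb, Gen (ebar X fb)] @ a) = gcls X x' ([] @ [] @ a)"
        using gcls_eq[OF r_into_rtranclp[of "gstep X x'", OF gstep_ctx(1)[OF X brel4[OF fbg] wl2]]] .
      then have gp: "gcomp X (ggen X (ebar X (rho B e))) (x, gcls X x (l # a)) = (x', gcls X x' a)"
        using gp1 Gen gog_graph(3)[OF X f(1)] fb_def E(3) by simp
      have ss: "sstep Y X B dag stx (Tm Y X B dag stx (z, qw @ [Elt (lam B z) g0], cdn B e be) (x, gcls X x (l # a)))
           (Tm Y X B dag stx (out B z qw e (g0, be)) (x', gcls X x' a))"
        unfolding sstep_def
        apply (rule bexI[of _ e], rule bexI[of _ be], rule bexI[of _ q], rule bexI[of _ "(x, gcls X x (l # a))"])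
             apply (rule conjI)
        subgoal using E(4) unfolding q_def by simp
        subgoal using gq gp unfolding out_def q_def by simp
        subgoal using p .
        subgoal using q .
        subgoal using E(6) .
        subgoal using E(1) E(2) by simp
        done
      have "(SR dag stx) (Tm Y X B dag stx \<sigma> (x, gcls X x (l # a)))
          (Tm Y X B dag stx (lift1 X Y B l \<sigma>) (x', gcls X x' a))"
        using ss eq1 eq2 by simp
      then show ?thesis by (rule r_into_rtranclp)
    qed
  qed
  show ?case using rtranclp_trans[OF step IH] .
qed

end



fun pre :: "('y, 'gy) letter list \<Rightarrow> 'b \<times> ('y, 'gy) letter list \<times> 'c \<Rightarrow> 'b \<times> ('y, 'gy) letter list \<times> 'c" where
  "pre rw (z, qw, b) = (z, rw @ qw, b)"

context gbs_ctx
begin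

lemma psi_sstep:
  assumes ss: "sstep Y X B dag stx s t"
  shows "psi Y X B dag s = psi Y X B dag t"
proof -
  obtain z b q p where z: "z \<in> bcar B" "z \<notin> Vb B" and b: "b \<in> bset B z"
    and q: "q \<in> pi1 Y dag (edn Y (lam B z))" and p: "p \<in> pi1 X (edn X (rho B z)) stx"
    and s: "s = (bdn B z, tcls Y X B dag stx (bdn B z) (q, cdn B z b, p))"
    and t: "t = (bup B z, tcls Y X B dag stx (bup B z)
               (gcomp Y q (ggen Y (lam B z)), cup B z b, gcomp X (ggen X (ebar X (rho B z))) p))"
    using ss unfolding sstep_def by blast
  define f where "f = rho B z"
  have fg: "f \<in> gcar X" "f \<notin> Vx X" using rho_mor(1)[OF z(1)] simplicial[OF z] f_def by auto
  have le: "lam B z \<in> gcar Y" "lam B (bdn B z) = edn Y (lam B z)" using lam_mor[OF z(1)] by auto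
  obtain qw where qw: "gwalk Y dag qw (lam B (bdn B z))" "q = (dag, gcls Y dag qw)"
    using pi1_ex[OF q] le by auto
  obtain a where a: "gwalk X (edn X f) a stx" "p = (edn X f, gcls X (edn X f) a)"
    using pi1_ex[OF p] f_def by auto
  have dV: "bdn B z \<in> Vb B" using bdn_Vb[OF z(1)] .
  have rd: "rho B (bdn B z) = edn X f" using rho_mor(2)[OF z(1)] f_def by simp
  have cd: "cdn B z b \<in> bset B (bdn B z)" using cmaps(1)[OF z(1) b] .
  have v1: "vst Y B dag (edn X f) (bdn B z, qw, cdn B z b)" using dV rd qw(1) cd by simp
  have ps: "psi Y X B dag s = {\<tau>. yeq Y B dag (lift X Y B a (bdn B z, qw, cdn B z b)) \<tau>}"
    using psi_T[OF v1 a(1)] s qw(2) a(2) by simp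
  have wz: "gwalk Y (lam B (bdn B z)) [Gen (lam B z)] (eup Y (lam B z))"
    using le eup_Vx[OF Y le(1)] by simp
  have gq: "gcomp Y q (ggen Y (lam B z)) = (dag, gcls Y dag (qw @ [Gen (lam B z)]))"
    unfolding ggen_def using gcomp_cls[OF Y qw(1) wz] qw(2) le by simp
  define fb where "fb = ebar X f"
  have fbg: "fb \<in> gcar X" using gog_graph(1)[OF X fg(1)] fb_def by simp
  have fbd: "edn X fb = eup X f" using fb_def by (simp add: eup_def)
  have fbu: "eup X fb = edn X f" using eup_ebar[OF X fg(1)] fb_def by simp
  have wfb: "gwalk X (eup X f) [Gen fb] (edn X f)" using fbg fbd fbu edn_Vx[OF X fg(1)] by simp
  have gp: "gcomp X (ggen X fb) p = (eup X f, gcls X (eup X f) (Gen fb # a))"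
    unfolding ggen_def using gcomp_cls[OF X wfb a(1)] a(2) fbd by simp
  have uV: "bup B z \<in> Vb B" using bup_Vb[OF z(1)] .
  have W2: "gwalk Y dag (qw @ [Gen (lam B z)]) (lam B (bup B z))"
    using walk_app[OF Y qw(1)] wz lam_bup[OF z(1)] by simp
  have v2: "vst Y B dag (eup X f) (bup B z, qw @ [Gen (lam B z)], cup B z b)"
    using uV rho_bup[OF z(1)] f_def W2 cup_bset[OF z(1) b] by simp
  have wa2: "gwalk X (eup X f) (Gen fb # a) stx" using walk_app[OF X wfb, of a stx] a(1) by simp
  have pt: "psi Y X B dag t = {\<tau>. yeq Y B dag (lift X Y B (Gen fb # a) (bup B z, qw @ [Gen (lam B z)], cup B z b)) \<tau>}"
    using psi_T[OF v2 wa2] t gq gp f_def fb_def by simp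
  have C: "yeq Y B dag (lift1 X Y B (Gen fb) (bup B z, qw @ [Gen (lam B z)], cup B z b)) (bdn B z, qw, cdn B z b)"
    using CANCEL[OF z b qw(1)] rho_mor(3)[OF z(1)] f_def fb_def by simp
  have "yeq Y B dag (lift X Y B a (lift1 X Y B (Gen fb) (bup B z, qw @ [Gen (lam B z)], cup B z b)))
      (lift X Y B a (bdn B z, qw, cdn B z b))"
    using L2w[OF C yeq_vst[OF yeq_sym[OF C] v1] a(1)] .
  then show ?thesis using ps pt yeq_class_eq by simp
qed

lemma psi_chain:
  assumes "(SR dag stx)\<^sup>*\<^sup>* s t"
  shows "psi Y X B dag s = psi Y X B dag t"
  using assms
proof (induction rule: rtranclp_induct)
  case (step b c)
  have "psi Y X B dag b = psi Y X B dag c" using step(2) psi_sstep by metis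
  then show ?case using step(3) by simp
qed simp

lemma Sp_iff: "s \<in> Sp Y X B dag stx x p \<longleftrightarrow> (\<exists>\<sigma>. vst Y B dag x \<sigma> \<and> s = Tm Y X B dag stx \<sigma> p)"
proof
  assume "s \<in> Sp Y X B dag stx x p"
  then obtain z q b where h: "s = (z, tcls Y X B dag stx z (q, b, p))" "z \<in> Vb B" "rho B z = x"
    "q \<in> pi1 Y dag (lam B z)" "b \<in> bset B z" unfolding Sp_def by blast
  obtain qw where qw: "gwalk Y dag qw (lam B z)" "q = (dag, gcls Y dag qw)" using pi1_ex[OF h(4)] by auto
  have "vst Y B dag x (z, qw, b) \<and> s = Tm Y X B dag stx (z, qw, b) p" using h qw by simp
  then show "\<exists>\<sigma>. vst Y B dag x \<sigma> \<and> s = Tm Y X B dag stx \<sigma> p" by blast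
next
  assume "\<exists>\<sigma>. vst Y B dag x \<sigma> \<and> s = Tm Y X B dag stx \<sigma> p"
  then obtain z qw b where h: "vst Y B dag x (z, qw, b)" "s = Tm Y X B dag stx (z, qw, b) p" by (metis prod_cases3)
  have "(dag, gcls Y dag qw) \<in> pi1 Y dag (lam B z)" using h(1) pi1_I by auto
  then show "s \<in> Sp Y X B dag stx x p" unfolding Sp_def using h by auto
qed

lemma Tm_Sset:
  assumes "vst Y B dag x \<sigma>" "p \<in> pi1 X x stx"
  shows "Tm Y X B dag stx \<sigma> p \<in> Sset Y X B dag stx"
proof -
  obtain z qw b where s: "\<sigma> = (z, qw, b)" by (cases \<sigma>) auto
  have td: "tdom Y X B dag stx z ((dag, gcls Y dag qw), b, p)"
    unfolding tdom_def using assms s pi1_I by auto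
  have "\<exists>z' s'. (z, tcls Y X B dag stx z ((dag, gcls Y dag qw), b, p)) = (z', tcls Y X B dag stx z' s') \<and>
      tdom Y X B dag stx z' s'"
    using td by (intro exI[of _ z] exI[of _ "((dag, gcls Y dag qw), b, p)"]) simp
  then show ?thesis unfolding Sset_def using s by simp
qed

lemma lift1_pre: "lift1 X Y B l (pre rw \<sigma>) = pre rw (lift1 X Y B l \<sigma>)"
proof -
  obtain z qw b where s: "\<sigma> = (z, qw, b)" by (cases \<sigma>) auto
  show ?thesis using s by (cases l) (auto simp: out_def)
qed

lemma lift_pre: "lift X Y B a (pre rw \<sigma>) = pre rw (lift X Y B a \<sigma>)"
  by (induction a arbitrary: \<sigma>) (simp_all add: lift1_pre)

lemma ystep_pre:
  assumes st: "ystep Y B dag \<sigma> \<tau>" and rw: "gwalk Y dag rw dag"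
  shows "ystep Y B dag (pre rw \<sigma>) (pre rw \<tau>)"
proof -
  obtain z qw b qw' b' where s: "\<sigma> = (z, qw, b)" "\<tau> = (z, qw', b')" and zV: "z \<in> Vb B"
    and W: "gwalk Y dag qw (lam B z)" and W': "gwalk Y dag qw' (lam B z)"
    and b: "b \<in> bset B z" and b': "b' \<in> bset B z"
    and R: "(gstep Y dag qw qw' \<and> b = b') \<or>
      (\<exists>h\<in>carrier (grp Y (lam B z)). qw = qw' @ [Elt (lam B z) h] \<and> b' = lact B z h b)"
    using st unfolding ystep_def by blast
  have W1: "gwalk Y dag (rw @ qw) (lam B z)" using walk_app[OF Y rw] W by simp
  have W1': "gwalk Y dag (rw @ qw') (lam B z)" using walk_app[OF Y rw] W' by simp
  have R': "(gstep Y dag (rw @ qw) (rw @ qw') \<and> b = b') \<or>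
      (\<exists>h\<in>carrier (grp Y (lam B z)). rw @ qw = (rw @ qw') @ [Elt (lam B z) h] \<and> b' = lact B z h b)"
    using R gstep_app_left[OF Y _ rw] by auto
  show ?thesis unfolding ystep_def using s zV W1 W1' b b' R' by simp
qed

lemma yeq_pre:
  assumes st: "yeq Y B dag \<sigma> \<tau>" and rw: "gwalk Y dag rw dag"
  shows "yeq Y B dag (pre rw \<sigma>) (pre rw \<tau>)"
  using st[unfolded yeq_def]
proof (induction rule: rtranclp_induct)
  case base then show ?case by (rule yeq_refl)
next
  case (step b c)
  have "yeq Y B dag (pre rw b) (pre rw c)"
    using step(2) ystep_yeq[OF ystep_pre[OF _ rw]] yeq_sym by metis
  then show ?case by (rule yeq_trans[OF step(3)])
qed

lemma tstep_pre:
  assumes st: "tstep Y X B dag stx z t1 t2" and rw: "gwalk Y dag rw dag"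
  shows "tstep Y X B dag stx z (gcomp Y (dag, gcls Y dag rw) (fst t1), snd t1) (gcomp Y (dag, gcls Y dag rw) (fst t2), snd t2)"
proof -
  have td1: "tdom Y X B dag stx z t1" and td2: "tdom Y X B dag stx z t2" using st unfolding tstep_def by auto
  note T1 = tdomD[OF td1] and T2 = tdomD[OF td2]
  have gc: "gcomp Y (dag, gcls Y dag rw) q = (dag, gcls Y dag (rw @ qw))"
    if "gwalk Y dag qw (lam B z)" "q = (dag, gcls Y dag qw)" for q qw
    using gcomp_cls[OF Y rw that(1)] that(2) by simp
  obtain qw1 where q1: "gwalk Y dag qw1 (lam B z)" "fst t1 = (dag, gcls Y dag qw1)" using pi1_ex[OF T1(2)] by auto
  obtain qw2 where q2: "gwalk Y dag qw2 (lam B z)" "fst t2 = (dag, gcls Y dag qw2)" using pi1_ex[OF T2(2)] by auto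
  have W1: "gwalk Y dag (rw @ qw1) (lam B z)" using walk_app[OF Y rw] q1(1) by simp
  have W2: "gwalk Y dag (rw @ qw2) (lam B z)" using walk_app[OF Y rw] q2(1) by simp
  have td1': "tdom Y X B dag stx z (gcomp Y (dag, gcls Y dag rw) (fst t1), snd t1)"
    unfolding tdom_def using T1 gc[OF q1] pi1_I[OF W1] by simp
  have td2': "tdom Y X B dag stx z (gcomp Y (dag, gcls Y dag rw) (fst t2), snd t2)"
    unfolding tdom_def using T2 gc[OF q2] pi1_I[OF W2] by simp
  from st have R: "(\<exists>h\<in>carrier (grp Y (lam B z)).
         fst t1 = gcomp Y (fst t2) (gel Y (lam B z) h) \<and>
         fst (snd t2) = lact B z h (fst (snd t1)) \<and> snd (snd t2) = snd (snd t1))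
    \<or> (\<exists>g\<in>carrier (grp X (rho B z)).
         fst t2 = fst t1 \<and> fst (snd t1) = ract B z (fst (snd t2)) g \<and>
         snd (snd t2) = gcomp X (gel X (rho B z) g) (snd (snd t1)))"
    unfolding tstep_def by blast
  have lzV: "lam B z \<in> Vx Y" using Vb_lam[OF T1(1)] .
  from R show ?thesis
  proof
    assume "\<exists>h\<in>carrier (grp Y (lam B z)).
         fst t1 = gcomp Y (fst t2) (gel Y (lam B z) h) \<and>
         fst (snd t2) = lact B z h (fst (snd t1)) \<and> snd (snd t2) = snd (snd t1)"
    then obtain h where h: "h \<in> carrier (grp Y (lam B z))" "fst t1 = gcomp Y (fst t2) (gel Y (lam B z) h)"
      "fst (snd t2) = lact B z h (fst (snd t1))" "snd (snd t2) = snd (snd t1)" by blast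
    have wh: "gwalk Y (lam B z) [Elt (lam B z) h] (lam B z)" using lzV h(1) by simp
    have "fst t1 = (dag, gcls Y dag (qw2 @ [Elt (lam B z) h]))"
      using h(2) q2(2) gcomp_cls[OF Y q2(1) wh] unfolding gel_def by simp
    then have e1: "gcomp Y (dag, gcls Y dag rw) (fst t1) = (dag, gcls Y dag (rw @ qw2 @ [Elt (lam B z) h]))"
      using gc[of "qw2 @ [Elt (lam B z) h]"] walk_app[OF Y q2(1)] wh by simp
    have e2: "gcomp Y (gcomp Y (dag, gcls Y dag rw) (fst t2)) (gel Y (lam B z) h) = (dag, gcls Y dag ((rw @ qw2) @ [Elt (lam B z) h]))"
      using gc[OF q2] gcomp_cls[OF Y W2 wh] unfolding gel_def by simp
    show ?thesis unfolding tstep_def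
      apply (intro conjI td1' td2' disjI1)
      apply (rule bexI[OF _ h(1)])
      using e1 e2 h(3) h(4) by simp
  next
    assume "\<exists>g\<in>carrier (grp X (rho B z)).
         fst t2 = fst t1 \<and> fst (snd t1) = ract B z (fst (snd t2)) g \<and>
         snd (snd t2) = gcomp X (gel X (rho B z) g) (snd (snd t1))"
    then obtain g where g: "g \<in> carrier (grp X (rho B z))" "fst t2 = fst t1"
      "fst (snd t1) = ract B z (fst (snd t2)) g" "snd (snd t2) = gcomp X (gel X (rho B z) g) (snd (snd t1))" by blast
    show ?thesis unfolding tstep_def
      apply (intro conjI td1' td2' disjI2)
      apply (rule bexI[OF _ g(1)])
      using g by simp
  qed
qed

lemma tcls_pre:
  assumes t: "t \<in> tcls Y X B dag stx z t0" and rw: "gwalk Y dag rw dag"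
  shows "tcls Y X B dag stx z (gcomp Y (dag, gcls Y dag rw) (fst t), snd t) =
         tcls Y X B dag stx z (gcomp Y (dag, gcls Y dag rw) (fst t0), snd t0)"
  using t unfolding tcls_mem
proof (induction rule: rtranclp_induct)
  case (step b c)
  have "tcls Y X B dag stx z (gcomp Y (dag, gcls Y dag rw) (fst b), snd b) =
        tcls Y X B dag stx z (gcomp Y (dag, gcls Y dag rw) (fst c), snd c)"
    using step(2) tcls_tstep[OF tstep_pre[OF _ rw]] by metis
  then show ?case using step(3) by simp
qed simp

lemma Sact_Tm:
  assumes v: "vst Y B dag x \<sigma>" and rw: "gwalk Y dag rw dag"
  shows "Sact Y X B dag stx (dag, gcls Y dag rw) (Tm Y X B dag stx \<sigma> p) = Tm Y X B dag stx (pre rw \<sigma>) p"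
proof -
  obtain z qw b where s: "\<sigma> = (z, qw, b)" by (cases \<sigma>) auto
  have W: "gwalk Y dag qw (lam B z)" using v s by simp
  define t0 where "t0 = ((dag, gcls Y dag qw), b, p)"
  define r where "r = (dag, gcls Y dag rw)"
  have g0: "gcomp Y r (fst t0) = (dag, gcls Y dag (rw @ qw))"
    unfolding r_def t0_def using gcomp_cls[OF Y rw W] by simp
  define C where "C = tcls Y X B dag stx z t0"
  define K where "K = tcls Y X B dag stx z (gcomp Y r (fst t0), snd t0)"
  have eq: "tcls Y X B dag stx z (gcomp Y r q, b', p') = K" if "(q, b', p') \<in> C" for q b' p'
    using tcls_pre[OF that[unfolded C_def] rw] unfolding r_def K_def by simp
  have st: "{tcls Y X B dag stx z (gcomp Y r q, b', p') | q b' p'. (q, b', p') \<in> C} = {K}"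
  proof (rule Set.set_eqI)
    fix M
    have t0C: "t0 \<in> C" unfolding C_def by (rule tcls_self)
    show "M \<in> {tcls Y X B dag stx z (gcomp Y r q, b', p') | q b' p'. (q, b', p') \<in> C} \<longleftrightarrow> M \<in> {K}"
    proof
      assume "M \<in> {tcls Y X B dag stx z (gcomp Y r q, b', p') | q b' p'. (q, b', p') \<in> C}"
      then obtain q b' p' where "M = tcls Y X B dag stx z (gcomp Y r q, b', p')" "(q, b', p') \<in> C" by blast
      then show "M \<in> {K}" using eq by simp
    next
      assume "M \<in> {K}"
      then have "M = tcls Y X B dag stx z (gcomp Y r (fst t0), fst (snd t0), snd (snd t0))"
        "(fst t0, fst (snd t0), snd (snd t0)) \<in> C" using t0C unfolding K_def by auto
      then show "M \<in> {tcls Y X B dag stx z (gcomp Y r q, b', p') | q b' p'. (q, b', p') \<in> C}" by blast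
    qed
  qed
  have "\<Union>{tcls Y X B dag stx z (gcomp Y r q, b', p') | q b' p'. (q, b', p') \<in> tcls Y X B dag stx z t0}
        = tcls Y X B dag stx z (gcomp Y r (fst t0), snd t0)"
    using st unfolding C_def K_def by simp
  then show ?thesis unfolding Sact_def using s g0 unfolding t0_def r_def by simp
qed

end



context gbs_ctx
begin

lemma F_rep:
  assumes p: "p \<in> pi1 X x stx" and a: "a \<in> snd p" and s: "s \<in> Sp Y X B dag stx x p"
  shows "\<exists>\<sigma>. vst Y B dag x \<sigma> \<and> s = Tm Y X B dag stx \<sigma> p \<and> psi Y X B dag s = {\<tau>. yeq Y B dag (lift X Y B a \<sigma>) \<tau>}"
proof -
  have pa: "gwalk X x a stx" "p = (x, gcls X x a)" using pi1_mem[OF X p a] by auto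
  obtain \<sigma> where \<sigma>: "vst Y B dag x \<sigma>" "s = Tm Y X B dag stx \<sigma> p" using s unfolding Sp_iff by blast
  have "psi Y X B dag s = {\<tau>. yeq Y B dag (lift X Y B a \<sigma>) \<tau>}" using psi_T[OF \<sigma>(1) pa(1)] \<sigma>(2) pa(2) by simp
  then show ?thesis using \<sigma> by blast
qed

lemma vst_rho: "vst Y B dag x \<sigma> \<Longrightarrow> rho B (fst \<sigma>) = x"
  by (cases \<sigma>) auto

lemma F_inj:
  assumes p: "p \<in> pi1 X x stx" and s1: "s1 \<in> Sp Y X B dag stx x p" and s2: "s2 \<in> Sp Y X B dag stx x p"
    and e: "psi Y X B dag s1 = psi Y X B dag s2"
  shows "s1 = s2"
proof -
  obtain a where a: "a \<in> snd p" "gwalk X x a stx" using pi1_ex[OF p] by blast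
  obtain \<sigma>1 where A: "vst Y B dag x \<sigma>1" "s1 = Tm Y X B dag stx \<sigma>1 p" "psi Y X B dag s1 = {\<tau>. yeq Y B dag (lift X Y B a \<sigma>1) \<tau>}"
    using F_rep[OF p a(1) s1] by blast
  obtain \<sigma>2 where B2: "vst Y B dag x \<sigma>2" "s2 = Tm Y X B dag stx \<sigma>2 p" "psi Y X B dag s2 = {\<tau>. yeq Y B dag (lift X Y B a \<sigma>2) \<tau>}"
    using F_rep[OF p a(1) s2] by blast
  have m: "lift X Y B a \<sigma>2 \<in> {\<tau>. yeq Y B dag (lift X Y B a \<sigma>2) \<tau>}" using yeq_refl[of Y B dag "lift X Y B a \<sigma>2"] by simp
  have "lift X Y B a \<sigma>2 \<in> {\<tau>. yeq Y B dag (lift X Y B a \<sigma>1) \<tau>}" using e A(3) B2(3) m by simp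
  then have y: "yeq Y B dag (lift X Y B a \<sigma>1) (lift X Y B a \<sigma>2)" by simp
  have v1: "vst Y B dag stx (lift X Y B a \<sigma>1)" by (rule lift_vst[OF A(1) a(2)])
  have y2: "yeq Y B dag (lift X Y B (invw X a) (lift X Y B a \<sigma>1)) (lift X Y B (invw X a) (lift X Y B a \<sigma>2))"
    by (rule L2w[OF y v1 invw_walk[OF X a(2)]])
  have y3: "yeq Y B dag \<sigma>1 \<sigma>2"
    using yeq_trans[OF yeq_sym[OF cancelw[OF A(1) a(2)]] yeq_trans[OF y2 cancelw[OF B2(1) a(2)]]] .
  have "p \<in> pi1 X (rho B (fst \<sigma>1)) stx" using p vst_rho[OF A(1)] by simp
  then show ?thesis using T_yeq[OF y3] A(2) B2(2) by simp
qed

lemma F_ex: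
  assumes p: "p \<in> pi1 X x stx" and p': "p' \<in> pi1 X x' stx" and s: "s \<in> Sp Y X B dag stx x p"
  shows "\<exists>t\<in>Sp Y X B dag stx x' p'. psi Y X B dag t = psi Y X B dag s"
proof -
  obtain a where a: "a \<in> snd p" "gwalk X x a stx" using pi1_ex[OF p] by blast
  obtain a' where a': "a' \<in> snd p'" "gwalk X x' a' stx" using pi1_ex[OF p'] by blast
  obtain \<sigma> where A: "vst Y B dag x \<sigma>" "s = Tm Y X B dag stx \<sigma> p" "psi Y X B dag s = {\<tau>. yeq Y B dag (lift X Y B a \<sigma>) \<tau>}"
    using F_rep[OF p a(1) s] by blast
  define \<tau>0 where "\<tau>0 = lift X Y B a \<sigma>"
  have v0: "vst Y B dag stx \<tau>0" unfolding \<tau>0_def by (rule lift_vst[OF A(1) a(2)])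
  define \<tau> where "\<tau> = lift X Y B (invw X a') \<tau>0"
  have v: "vst Y B dag x' \<tau>" unfolding \<tau>_def by (rule lift_vst[OF v0 invw_walk[OF X a'(2)]])
  define t where "t = Tm Y X B dag stx \<tau> p'"
  have t: "t \<in> Sp Y X B dag stx x' p'" unfolding Sp_iff t_def using v by blast
  obtain \<tau>' where B2: "vst Y B dag x' \<tau>'" "t = Tm Y X B dag stx \<tau>' p'" "psi Y X B dag t = {\<mu>. yeq Y B dag (lift X Y B a' \<tau>') \<mu>}"
    using F_rep[OF p' a'(1) t] by blast
  have pt: "psi Y X B dag t = {\<mu>. yeq Y B dag (lift X Y B a' \<tau>) \<mu>}"
    using psi_T[OF v a'(2)] pi1_mem[OF X p' a'(1)] unfolding t_def by simp
  have "yeq Y B dag (lift X Y B a' \<tau>) \<tau>0" unfolding \<tau>_def by (rule cancelw2[OF v0 a'(2)])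
  then have "psi Y X B dag t = psi Y X B dag s" using pt A(3) yeq_class_eq \<tau>0_def by simp
  then show ?thesis using t by blast
qed

lemma F_sim:
  assumes p1: "p1 \<in> pi1 X x1 stx" and p2: "p2 \<in> pi1 X x2 stx"
    and s: "s \<in> Sp Y X B dag stx x1 p1" and t: "t \<in> Sp Y X B dag stx x2 p2"
  shows "simS Y X B dag stx s t \<longleftrightarrow> psi Y X B dag s = psi Y X B dag t"
proof
  assume "simS Y X B dag stx s t"
  then have "(SR dag stx)\<^sup>*\<^sup>* s t" unfolding simS_def by blast
  then show "psi Y X B dag s = psi Y X B dag t" by (rule psi_chain)
next
  assume e: "psi Y X B dag s = psi Y X B dag t"
  obtain a1 where a1: "a1 \<in> snd p1" "gwalk X x1 a1 stx" "p1 = (x1, gcls X x1 a1)" using pi1_ex[OF p1] by blast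
  obtain a2 where a2: "a2 \<in> snd p2" "gwalk X x2 a2 stx" "p2 = (x2, gcls X x2 a2)" using pi1_ex[OF p2] by blast
  obtain \<sigma> where A: "vst Y B dag x1 \<sigma>" "s = Tm Y X B dag stx \<sigma> p1" "psi Y X B dag s = {\<tau>. yeq Y B dag (lift X Y B a1 \<sigma>) \<tau>}"
    using F_rep[OF p1 a1(1) s] by blast
  obtain \<tau> where B2: "vst Y B dag x2 \<tau>" "t = Tm Y X B dag stx \<tau> p2" "psi Y X B dag t = {\<mu>. yeq Y B dag (lift X Y B a2 \<tau>) \<mu>}"
    using F_rep[OF p2 a2(1) t] by blast
  have m: "lift X Y B a2 \<tau> \<in> {\<mu>. yeq Y B dag (lift X Y B a2 \<tau>) \<mu>}" using yeq_refl[of Y B dag "lift X Y B a2 \<tau>"] by simp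
  have "lift X Y B a2 \<tau> \<in> {\<mu>. yeq Y B dag (lift X Y B a1 \<sigma>) \<mu>}" using e A(3) B2(3) m by simp
  then have y: "yeq Y B dag (lift X Y B a1 \<sigma>) (lift X Y B a2 \<tau>)" by simp
  have v1: "vst Y B dag stx (lift X Y B a1 \<sigma>)" by (rule lift_vst[OF A(1) a1(2)])
  have stV: "stx \<in> Vx X" using gwalk_end[OF a1(2)] .
  have pid: "(stx, gcls X stx []) \<in> pi1 X (rho B (fst (lift X Y B a1 \<sigma>))) stx"
    using pi1_I[of X stx "[]" stx] stV vst_rho[OF v1] by simp
  have N: "Tm Y X B dag stx (lift X Y B a1 \<sigma>) (stx, gcls X stx []) = Tm Y X B dag stx (lift X Y B a2 \<tau>) (stx, gcls X stx [])"
    by (rule T_yeq[OF y pid])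
  have c1: "(SR dag stx)\<^sup>*\<^sup>* s (Tm Y X B dag stx (lift X Y B a1 \<sigma>) (stx, gcls X stx []))"
    using L7[OF A(1) a1(2)] A(2) a1(3) by simp
  have c2: "(SR dag stx)\<^sup>*\<^sup>* t (Tm Y X B dag stx (lift X Y B a2 \<tau>) (stx, gcls X stx []))"
    using L7[OF B2(1) a2(2)] B2(2) a2(3) by simp
  have c: "(SR dag stx)\<^sup>*\<^sup>* s t" using rtranclp_trans[OF c1 symcl_sym[OF c2[folded N]]] .
  have "s \<in> Sset Y X B dag stx" using Tm_Sset[OF A(1) p1] A(2) by simp
  moreover have "t \<in> Sset Y X B dag stx" using Tm_Sset[OF B2(1) p2] B2(2) by simp
  ultimately show "simS Y X B dag stx s t" unfolding simS_def using c by blast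
qed

lemma F_act:
  assumes p: "p \<in> pi1 X x stx" and a: "a \<in> snd p" and rw: "gwalk Y dag rw dag" "r = (dag, gcls Y dag rw)"
    and s: "s \<in> Sp Y X B dag stx x p"
  shows "\<exists>\<sigma>. Sact Y X B dag stx r s \<in> Sp Y X B dag stx x p \<and>
    psi Y X B dag (Sact Y X B dag stx r s) = {\<tau>. yeq Y B dag (pre rw (lift X Y B a \<sigma>)) \<tau>} \<and>
    psi Y X B dag s = {\<tau>. yeq Y B dag (lift X Y B a \<sigma>) \<tau>}"
proof -
  obtain \<sigma> where A: "vst Y B dag x \<sigma>" "s = Tm Y X B dag stx \<sigma> p" "psi Y X B dag s = {\<tau>. yeq Y B dag (lift X Y B a \<sigma>) \<tau>}"
    using F_rep[OF p a s] by blast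
  have pa: "gwalk X x a stx" "p = (x, gcls X x a)" using pi1_mem[OF X p a] by auto
  have eq: "Sact Y X B dag stx r s = Tm Y X B dag stx (pre rw \<sigma>) p" using Sact_Tm[OF A(1) rw(1)] rw(2) A(2) by simp
  have vp: "vst Y B dag x (pre rw \<sigma>)"
  proof -
    obtain z qw b where "\<sigma> = (z, qw, b)" by (cases \<sigma>) auto
    then show ?thesis using A(1) walk_app[OF Y rw(1)] by auto
  qed
  have inS: "Sact Y X B dag stx r s \<in> Sp Y X B dag stx x p" unfolding Sp_iff using eq vp by blast
  have "psi Y X B dag (Sact Y X B dag stx r s) = {\<tau>. yeq Y B dag (lift X Y B a (pre rw \<sigma>)) \<tau>}"
    using psi_T[OF vp pa(1)] eq pa(2) by simp
  then have "psi Y X B dag (Sact Y X B dag stx r s) = {\<tau>. yeq Y B dag (pre rw (lift X Y B a \<sigma>)) \<tau>}"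
    by (simp add: lift_pre)
  then show ?thesis using inS A(3) by blast
qed

end



theorem mainTheorem4:
  fixes Y :: "('y, 'gy) gog" and X :: "('x, 'gx) gog"
    and B :: "('b, 'c, 'y, 'x, 'gy, 'gx) gbs"
    and dag :: 'y and st :: 'x and x1 x2 :: 'x
    and p1 p2 :: "('x, 'gx) gmor"
  assumes "is_gog Y" and "is_gog X" and "is_gbs Y X B" and "left_fibrant Y X B"
    and "dag \<in> Vx Y" and "st \<in> Vx X"
    and "x1 \<in> Vx X" and "x2 \<in> Vx X"
    and "p1 \<in> pi1 X x1 st" and "p2 \<in> pi1 X x2 st"
  shows "\<exists>f. bij_betw f (Sp Y X B dag st x1 p1) (Sp Y X B dag st x2 p2)
           \<and> (\<forall>s\<in>Sp Y X B dag st x1 p1. \<forall>t\<in>Sp Y X B dag st x2 p2.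
                 simS Y X B dag st s t \<longleftrightarrow> t = f s)
           \<and> (\<forall>r\<in>pi1 Y dag dag. \<forall>s\<in>Sp Y X B dag st x1 p1.
                 f (Sact Y X B dag st r s) = Sact Y X B dag st r (f s))"
proof -
  interpret gbs_ctx Y X B using assms(1-4) by unfold_locales
  note p1 = assms(9) and p2 = assms(10)
  define S1 where "S1 = Sp Y X B dag st x1 p1"
  define S2 where "S2 = Sp Y X B dag st x2 p2"
  define f where "f = (\<lambda>s. SOME t. t \<in> S2 \<and> psi Y X B dag t = psi Y X B dag s)"
  have fS: "f s \<in> S2 \<and> psi Y X B dag (f s) = psi Y X B dag s" if s: "s \<in> S1" for s
  proof -
    have "\<exists>t. t \<in> S2 \<and> psi Y X B dag t = psi Y X B dag s"
      using F_ex[OF p1 p2 s[unfolded S1_def]] unfolding S2_def by blast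
    then show ?thesis unfolding f_def by (rule someI_ex)
  qed
  have inj2: "t1 = t2" if "t1 \<in> S2" "t2 \<in> S2" "psi Y X B dag t1 = psi Y X B dag t2" for t1 t2
    using F_inj[OF p2] that unfolding S2_def by blast
  have inj1: "t1 = t2" if "t1 \<in> S1" "t2 \<in> S1" "psi Y X B dag t1 = psi Y X B dag t2" for t1 t2
    using F_inj[OF p1] that unfolding S1_def by blast
  have bij: "bij_betw f S1 S2"
    unfolding bij_betw_def
  proof
    show "inj_on f S1"
    proof (rule inj_onI)
      fix s1 s2 assume "s1 \<in> S1" "s2 \<in> S1" "f s1 = f s2"
      then show "s1 = s2" using inj1 fS by metis
    qed
    show "f ` S1 = S2"
    proof
      show "f ` S1 \<subseteq> S2" using fS by blast
      show "S2 \<subseteq> f ` S1"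
      proof
        fix t assume t: "t \<in> S2"
        obtain s where s: "s \<in> S1" "psi Y X B dag s = psi Y X B dag t"
          using F_ex[OF p2 p1 t[unfolded S2_def]] unfolding S1_def by blast
        have "f s = t" using inj2[OF conjunct1[OF fS[OF s(1)]] t] fS[OF s(1)] s(2) by simp
        then show "t \<in> f ` S1" using s(1) by blast
      qed
    qed
  qed
  have sim: "simS Y X B dag st s t \<longleftrightarrow> t = f s" if s: "s \<in> S1" and t: "t \<in> S2" for s t
  proof -
    have "simS Y X B dag st s t \<longleftrightarrow> psi Y X B dag s = psi Y X B dag t"
      using F_sim[OF p1 p2 s[unfolded S1_def] t[unfolded S2_def]] .
    also have "\<dots> \<longleftrightarrow> t = f s"
    proof
      assume "psi Y X B dag s = psi Y X B dag t"
      then show "t = f s" using inj2[OF t conjunct1[OF fS[OF s]]] fS[OF s] by simp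
    next
      assume "t = f s" then show "psi Y X B dag s = psi Y X B dag t" using fS[OF s] by simp
    qed
    finally show ?thesis .
  qed
  have act: "f (Sact Y X B dag st r s) = Sact Y X B dag st r (f s)" if r: "r \<in> pi1 Y dag dag" and s: "s \<in> S1" for r s
  proof -
    obtain rw where rw: "gwalk Y dag rw dag" "r = (dag, gcls Y dag rw)" using pi1_ex[OF r] by blast
    obtain a1 where a1: "a1 \<in> snd p1" using pi1_ex[OF p1] by blast
    obtain a2 where a2: "a2 \<in> snd p2" using pi1_ex[OF p2] by blast
    have fs: "f s \<in> S2" "psi Y X B dag (f s) = psi Y X B dag s" using fS[OF s] by auto
    obtain \<sigma> where A: "Sact Y X B dag st r s \<in> S1"
      "psi Y X B dag (Sact Y X B dag st r s) = {\<tau>. yeq Y B dag (pre rw (lift X Y B a1 \<sigma>)) \<tau>}"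
      "psi Y X B dag s = {\<tau>. yeq Y B dag (lift X Y B a1 \<sigma>) \<tau>}"
      using F_act[OF p1 a1 rw s[unfolded S1_def]] unfolding S1_def by blast
    obtain \<tau> where B2: "Sact Y X B dag st r (f s) \<in> S2"
      "psi Y X B dag (Sact Y X B dag st r (f s)) = {\<mu>. yeq Y B dag (pre rw (lift X Y B a2 \<tau>)) \<mu>}"
      "psi Y X B dag (f s) = {\<mu>. yeq Y B dag (lift X Y B a2 \<tau>) \<mu>}"
      using F_act[OF p2 a2 rw fs(1)[unfolded S2_def]] unfolding S2_def by blast
    have m: "lift X Y B a2 \<tau> \<in> {\<mu>. yeq Y B dag (lift X Y B a2 \<tau>) \<mu>}" using yeq_refl[of Y B dag "lift X Y B a2 \<tau>"] by simp
    have "lift X Y B a2 \<tau> \<in> {\<mu>. yeq Y B dag (lift X Y B a1 \<sigma>) \<mu>}" using fs(2) A(3) B2(3) m by simp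
    then have y: "yeq Y B dag (lift X Y B a1 \<sigma>) (lift X Y B a2 \<tau>)" by simp
    have y2: "yeq Y B dag (pre rw (lift X Y B a1 \<sigma>)) (pre rw (lift X Y B a2 \<tau>))" by (rule yeq_pre[OF y rw(1)])
    have e: "psi Y X B dag (f (Sact Y X B dag st r s)) = psi Y X B dag (Sact Y X B dag st r (f s))"
      using fS[OF A(1)] A(2) B2(2) yeq_class_eq[OF y2] by simp
    show ?thesis using inj2[OF conjunct1[OF fS[OF A(1)]] B2(1) e] .
  qed
  show ?thesis
    apply (rule exI[of _ f])
    using bij sim act unfolding S1_def S2_def by blast
qed



end
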